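(* For $w\in S_n$, $$(\bar\chi^w)^\star=\sum_{z}(-1)^{|\iota(z)|-|\iota(y)|}\,\bar\chi^z,$$ where the sum is over those $z\in S_n$ for which the set $\{x\in C_z^\vee:\kappa(x)\ge\kappa(w^{-1})\}$ consists of exactly one element, and $y$ denotes that element.
   Context: Let $q$ be a prime power and $\mathfrak{ut}_n$ the additive group of strictly upper triangular $n\times n$ matrices over $\mathbb{F}_q$. For $w\in S_n$ (one-line notation): inversion table $\iota_k(w)=\#\{i<w^{-1}(k):w(i)>k\}$, $|\iota(w)|=\sum_k\iota_k(w)$; code $\kappa_k(w)=\#\{i<w(k):w^{-1}(i)>k\}$. Vectors are compared componentwise. $\mathfrak{ut}_w=\{x\in\mathfrak{ut}_n:x_{ij}\ne0\Rightarrow0<j-i\le\iota_i(w)\}$; $\mathfrak{ut}_v\subseteq\mathfrak{ut}_w$ iff $\iota(v)\le\iota(w)$ (inversion table order), and these subgroups form a lattice. The normal lattice supercharacter theory has supercharacters $\chi^w=\sum_\psi\psi(1)\psi$, over irreducible characters $\psi$ of $\mathfrak{ut}_n$ with $\mathfrak{ut}_w$ the largest lattice member contained in $\ker\psi$; $\mathrm{scf}(\mathfrak{ut}_n)$ is their span. The permutation character $\bar\chi^w$ is the character of $\mathrm{Ind}_{\mathfrak{ut}_w}^{\mathfrak{ut}_n}(\mathbf{1})$ (equivalently $\bar\chi^w=\sum_{v:\mathfrak{ut}_v\supseteq\mathfrak{ut}_w}\chi^v$). The involution $\star$ on $\mathrm{scf}(\mathfrak{ut}_n)$ is the linear map $\chi^w\mapsto\chi^{w^{-1}}$.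 For $z\in S_n$, $C_z^\vee$ is the Boolean sublattice of the inversion table order generated by the elements covered by $z$, namely the set of $x\in S_n$ with $\iota_k(z)-1\le\iota_k(x)\le\iota_k(z)$ for all $k$. *)

theory Defs
  imports "HOL-Combinatorics.Permutations" "HOL-Library.Function_Algebras" Complex_Main
begin

definition Sn :: "nat \<Rightarrow> (nat \<Rightarrow> nat) set" where
  "Sn n = {w. w permutes {1..n}}"

definition iota :: "(nat \<Rightarrow> nat) \<Rightarrow> nat \<Rightarrow> nat" where
  "iota w k = card {i. 1 \<le> i \<and> i < inv w k \<and> w i > k}"

definition iota_size :: "nat \<Rightarrow> (nat \<Rightarrow> nat) \<Rightarrow> nat" where
  "iota_size n w = (\<Sum>k=1..n. iota w k)"

definition kappa :: "(nat \<Rightarrow> nat) \<Rightarrow> nat \<Rightarrow> nat" where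
  "kappa w k = card {i. 1 \<le> i \<and> i < w k \<and> inv w i > k}"

definition Cvee :: "nat \<Rightarrow> (nat \<Rightarrow> nat) \<Rightarrow> (nat \<Rightarrow> nat) set" where
  "Cvee n z = {x \<in> Sn n. \<forall>k\<in>{1..n}. iota z k \<le> iota x k + 1 \<and> iota x k \<le> iota z k}"

definition ut :: "nat \<Rightarrow> (nat \<Rightarrow> nat \<Rightarrow> 'a::{finite,field}) set" where
  "ut n = {x. \<forall>i j. x i j \<noteq> 0 \<longrightarrow> 1 \<le> i \<and> i < j \<and> j \<le> n}"

definition utw :: "nat \<Rightarrow> (nat \<Rightarrow> nat) \<Rightarrow> (nat \<Rightarrow> nat \<Rightarrow> 'a::{finite,field}) set" where
  "utw n w = {x \<in> ut n. \<forall>i j. x i j \<noteq> 0 \<longrightarrow> 0 < j - i \<and> j - i \<le> iota w i}"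

text \<open>Irreducible characters of the abelian group (ut n, +): these are exactly the
  linear characters, i.e. homomorphisms into the multiplicative group of C
  (taken to be 0 outside the group).\<close>
definition irr :: "nat \<Rightarrow> ((nat \<Rightarrow> nat \<Rightarrow> 'a::{finite,field}) \<Rightarrow> complex) set" where
  "irr n = {\<psi>. \<psi> 0 = 1 \<and> (\<forall>x y. x \<in> ut n \<longrightarrow> y \<in> ut n \<longrightarrow> \<psi> (x + y) = \<psi> x * \<psi> y)
              \<and> (\<forall>x. x \<notin> ut n \<longrightarrow> \<psi> x = 0)}"

definition ker_char :: "nat \<Rightarrow> ((nat \<Rightarrow> nat \<Rightarrow> 'a::{finite,field}) \<Rightarrow> complex)
    \<Rightarrow> (nat \<Rightarrow> nat \<Rightarrow> 'a) set" where
  "ker_char n \<psi> = {x \<in> ut n. \<psi> x = \<psi> 0}"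

definition largest_in_ker :: "nat \<Rightarrow> (nat \<Rightarrow> nat) \<Rightarrow> ((nat \<Rightarrow> nat \<Rightarrow> 'a::{finite,field}) \<Rightarrow> complex) \<Rightarrow> bool" where
  "largest_in_ker n w \<psi> \<longleftrightarrow> utw n w \<subseteq> ker_char n \<psi> \<and>
     (\<forall>v\<in>Sn n. utw n v \<subseteq> ker_char n \<psi> \<longrightarrow> utw n v \<subseteq> (utw n w :: (nat \<Rightarrow> nat \<Rightarrow> 'a) set))"

definition chi :: "nat \<Rightarrow> (nat \<Rightarrow> nat) \<Rightarrow> (nat \<Rightarrow> nat \<Rightarrow> 'a::{finite,field}) \<Rightarrow> complex" where
  "chi n w = (\<lambda>x. \<Sum>\<psi>\<in>{\<psi>\<in>irr n. largest_in_ker n w \<psi>}. \<psi> 0 * \<psi> x)"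

text \<open>Permutation character of Ind_{ut_w}^{ut_n}(1), via the induced character formula
  (1/|H|) * sum over g in G with g^{-1} x g in H of 1.\<close>
definition chibar :: "nat \<Rightarrow> (nat \<Rightarrow> nat) \<Rightarrow> (nat \<Rightarrow> nat \<Rightarrow> 'a::{finite,field}) \<Rightarrow> complex" where
  "chibar n w = (\<lambda>x. if x \<in> ut n then
      (\<Sum>g\<in>ut n. if - g + x + g \<in> (utw n w :: (nat \<Rightarrow> nat \<Rightarrow> 'a) set) then 1 else 0)
        / of_nat (card (utw n w :: (nat \<Rightarrow> nat \<Rightarrow> 'a) set))
      else 0)"

end

theory Submission
  imports Defs "HOL-Computational_Algebra.Primes"
begin


definition ins :: "nat \<Rightarrow> nat \<Rightarrow> (nat \<Rightarrow> nat) \<Rightarrow> (nat \<Rightarrow> nat)" where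
  "ins m a \<sigma> = (\<lambda>i. if i = 0 \<or> Suc m < i then i else if i \<le> a then Suc (\<sigma> i)
      else if i = Suc a then 1 else Suc (\<sigma> (i - 1)))"

definition insinv :: "nat \<Rightarrow> nat \<Rightarrow> (nat \<Rightarrow> nat) \<Rightarrow> (nat \<Rightarrow> nat)" where
  "insinv m a \<sigma> = (\<lambda>j. if j = 0 \<or> Suc m < j then j else if j = 1 then Suc a
      else if inv \<sigma> (j - 1) \<le> a then inv \<sigma> (j - 1) else Suc (inv \<sigma> (j - 1)))"

lemma perm_facts:
  assumes "\<sigma> permutes {1..m}"
  shows "\<And>i. i \<in> {1..m} \<Longrightarrow> \<sigma> i \<in> {1..m}" "\<And>i. i \<in> {1..m} \<Longrightarrow> inv \<sigma> i \<in> {1..m}"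
    "\<And>i. \<sigma> (inv \<sigma> i) = i" "\<And>i. inv \<sigma> (\<sigma> i) = i"
    "\<And>i. i \<notin> {1..m} \<Longrightarrow> \<sigma> i = i" "\<And>i. i \<notin> {1..m} \<Longrightarrow> inv \<sigma> i = i"
  using assms permutes_in_image permutes_inv permutes_inverses permutes_not_in
  by (metis, metis, metis, metis, metis, metis)

lemma ins_insinv:
  assumes "\<sigma> permutes {1..m}" "a \<le> m"
  shows "ins m a \<sigma> (insinv m a \<sigma> j) = j"
proof -
  note f = perm_facts[OF assms(1)]
  show ?thesis
  proof (cases "j = 0 \<or> Suc m < j")
    case True thus ?thesis by (auto simp: ins_def insinv_def)
  next
    case False
    show ?thesis
    proof (cases "j = 1")
      case True thus ?thesis using assms by (auto simp: ins_def insinv_def)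
    next
      case j1: False
      have jj: "j - 1 \<in> {1..m}" using False j1 by auto
      have i: "inv \<sigma> (j - 1) \<in> {1..m}" using f(2)[OF jj] .
      have s: "\<sigma> (inv \<sigma> (j - 1)) = j - 1" using f(3) .
      show ?thesis using False j1 i s by (auto simp: ins_def insinv_def)
    qed
  qed
qed

lemma insinv_ins:
  assumes "\<sigma> permutes {1..m}" "a \<le> m"
  shows "insinv m a \<sigma> (ins m a \<sigma> i) = i"
proof -
  note f = perm_facts[OF assms(1)]
  show ?thesis
  proof (cases "i = 0 \<or> Suc m < i")
    case True thus ?thesis by (auto simp: ins_def insinv_def)
  next
    case False
    consider "i \<le> a" | "i = Suc a" | "Suc a < i" by linarith
    thus ?thesis
    proof cases
      case 1
      have "i \<in> {1..m}" using 1 False assms by auto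
      hence "\<sigma> i \<in> {1..m}" using f(1) by blast
      thus ?thesis using 1 False f(4)[of i] by (auto simp: ins_def insinv_def)
    next
      case 2 thus ?thesis using False by (auto simp: ins_def insinv_def)
    next
      case 3
      have "i - 1 \<in> {1..m}" using 3 False assms by auto
      hence "\<sigma> (i - 1) \<in> {1..m}" using f(1) by blast
      thus ?thesis using 3 False f(4)[of "i - 1"] by (auto simp: ins_def insinv_def)
    qed
  qed
qed

lemma ins_permutes:
  assumes "\<sigma> permutes {1..m}" "a \<le> m"
  shows "ins m a \<sigma> permutes {1..Suc m}"
  unfolding permutes_def
proof (intro conjI allI impI)
  show "\<And>x. x \<notin> {1..Suc m} \<Longrightarrow> ins m a \<sigma> x = x" by (auto simp: ins_def)
  fix y show "\<exists>!x. ins m a \<sigma> x = y"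
    by (metis ins_insinv[OF assms] insinv_ins[OF assms])
qed

lemma inv_ins:
  assumes "\<sigma> permutes {1..m}" "a \<le> m"
  shows "inv (ins m a \<sigma>) = insinv m a \<sigma>"
  by (rule inv_unique_comp) (simp_all add: fun_eq_iff ins_insinv[OF assms] insinv_ins[OF assms])

lemma iota_ins_1:
  assumes "\<sigma> permutes {1..m}" "a \<le> m"
  shows "iota (ins m a \<sigma>) 1 = a"
proof -
  note f = perm_facts[OF assms(1)]
  have "inv (ins m a \<sigma>) 1 = Suc a" by (simp add: inv_ins[OF assms] insinv_def)
  moreover have "{i. 1 \<le> i \<and> i < Suc a \<and> 1 < ins m a \<sigma> i} = {1..a}"
  proof (rule set_eqI, rule iffI)
    fix i assume "i \<in> {1..a}"
    hence "i \<in> {1..m}" using assms by auto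
    hence "\<sigma> i \<in> {1..m}" using f(1) by blast
    thus "i \<in> {i. 1 \<le> i \<and> i < Suc a \<and> 1 < ins m a \<sigma> i}" using \<open>i \<in> {1..a}\<close> assms
      by (auto simp: ins_def)
  qed auto
  ultimately show ?thesis by (simp add: iota_def)
qed

lemma iota_ins_Suc:
  assumes "\<sigma> permutes {1..m}" "a \<le> m" "k \<in> {1..m}"
  shows "iota (ins m a \<sigma>) (Suc k) = iota \<sigma> k"
proof -
  note f = perm_facts[OF assms(1)]
  define b where "b = inv \<sigma> k"
  have b: "b \<in> {1..m}" "\<sigma> b = k" using f(2,3) assms(3) b_def by auto
  have ib: "inv (ins m a \<sigma>) (Suc k) = (if b \<le> a then b else Suc b)"
    using assms(3) by (simp add: inv_ins[OF assms(1,2)] insinv_def b_def)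
  define g where "g = (\<lambda>j::nat. if j \<le> a then j else Suc j)"
  have inj: "inj_on g A" for A by (auto simp: g_def inj_on_def split: if_splits)
  have "{i. 1 \<le> i \<and> i < inv (ins m a \<sigma>) (Suc k) \<and> Suc k < ins m a \<sigma> i}
      = g ` {i. 1 \<le> i \<and> i < inv \<sigma> k \<and> k < \<sigma> i}"
  proof (rule set_eqI, rule iffI)
    fix j assume "j \<in> {i. 1 \<le> i \<and> i < inv (ins m a \<sigma>) (Suc k) \<and> Suc k < ins m a \<sigma> i}"
    hence j: "1 \<le> j" "j < (if b \<le> a then b else Suc b)" "Suc k < ins m a \<sigma> j" using ib by auto
    have jm: "j \<le> Suc m" using j b by (auto split: if_splits)
    consider "j \<le> a" | "j = Suc a" | "Suc a < j" by linarith
    thus "j \<in> g ` {i. 1 \<le> i \<and> i < inv \<sigma> k \<and> k < \<sigma> i}"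
    proof cases
      case 1
      hence "k < \<sigma> j" using j jm by (auto simp: ins_def)
      moreover have "j < b" using j 1 by (auto split: if_splits)
      ultimately show ?thesis using j 1 by (auto simp: g_def b_def image_iff intro!: bexI[of _ j])
    next
      case 2 thus ?thesis using j assms(2) by (auto simp: ins_def)
    next
      case 3
      hence "k < \<sigma> (j - 1)" using j jm by (auto simp: ins_def)
      moreover have "j - 1 < b" using j 3 by (auto split: if_splits)
      ultimately show ?thesis using j 3 by (auto simp: g_def b_def image_iff intro!: bexI[of _ "j - 1"])
    qed
  next
    fix j assume "j \<in> g ` {i. 1 \<le> i \<and> i < inv \<sigma> k \<and> k < \<sigma> i}"
    then obtain i where i: "1 \<le> i" "i < b" "k < \<sigma> i" "j = g i" by (auto simp: b_def)
    have im: "i \<in> {1..m}" using i b by auto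
    show "j \<in> {i. 1 \<le> i \<and> i < inv (ins m a \<sigma>) (Suc k) \<and> Suc k < ins m a \<sigma> i}"
    proof (cases "i \<le> a")
      case True thus ?thesis using i im ib by (auto simp: g_def ins_def)
    next
      case False thus ?thesis using i im ib by (auto simp: g_def ins_def)
    qed
  qed
  thus ?thesis unfolding iota_def by (simp add: card_image[OF inj])
qed

lemma kappa_ins:
  assumes "\<sigma> permutes {1..m}" "a \<le> m" "i \<in> {1..Suc m}"
  shows "kappa (ins m a \<sigma>) i = (if i \<le> a then Suc (kappa \<sigma> i) else if i = Suc a then 0
     else kappa \<sigma> (i - 1))"
proof -
  note f = perm_facts[OF assms(1)]
  have iv: "inv (ins m a \<sigma>) j = insinv m a \<sigma> j" for j by (simp add: inv_ins[OF assms(1,2)])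
  consider "i \<le> a" | "i = Suc a" | "Suc a < i" by linarith
  thus ?thesis
  proof cases
    case 1
    have im: "i \<in> {1..m}" using 1 assms by auto
    have si: "\<sigma> i \<in> {1..m}" using f(1) im by blast
    have "{j. 1 \<le> j \<and> j < ins m a \<sigma> i \<and> i < inv (ins m a \<sigma>) j}
      = insert 1 (Suc ` {j. 1 \<le> j \<and> j < \<sigma> i \<and> i < inv \<sigma> j})"
    proof (rule set_eqI, rule iffI)
      fix j assume "j \<in> {j. 1 \<le> j \<and> j < ins m a \<sigma> i \<and> i < inv (ins m a \<sigma>) j}"
      hence j: "1 \<le> j" "j < Suc (\<sigma> i)" "i < insinv m a \<sigma> j" using 1 im iv by (auto simp: ins_def)
      show "j \<in> insert 1 (Suc ` {j. 1 \<le> j \<and> j < \<sigma> i \<and> i < inv \<sigma> j})"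
      proof (cases "j = 1")
        case False
        have jm: "j - 1 \<in> {1..m}" using j False si by auto
        have "i < inv \<sigma> (j - 1)" using j False jm 1 by (auto simp: insinv_def split: if_splits)
        thus ?thesis using j False by (intro insertI2 image_eqI[where x="j - 1"]) auto
      qed simp
    next
      fix j assume "j \<in> insert 1 (Suc ` {j. 1 \<le> j \<and> j < \<sigma> i \<and> i < inv \<sigma> j})"
      thus "j \<in> {j. 1 \<le> j \<and> j < ins m a \<sigma> i \<and> i < inv (ins m a \<sigma>) j}"
      proof
        assume "j = 1" thus ?thesis using 1 im iv si by (auto simp: ins_def insinv_def)
      next
        assume "j \<in> Suc ` {j. 1 \<le> j \<and> j < \<sigma> i \<and> i < inv \<sigma> j}"
        then obtain j' where j': "j = Suc j'" "1 \<le> j'" "j' < \<sigma> i" "i < inv \<sigma> j'" by auto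
        have "j' \<le> m" using j' si by auto
        thus ?thesis using j' 1 im iv by (auto simp: ins_def insinv_def)
      qed
    qed
    moreover have fin: "finite {j. 1 \<le> j \<and> j < \<sigma> i \<and> i < inv \<sigma> j}" by (rule finite_subset[of _ "{..<\<sigma> i}"]) auto
    moreover have "1 \<notin> Suc ` {j. 1 \<le> j \<and> j < \<sigma> i \<and> i < inv \<sigma> j}" by auto
    ultimately show ?thesis using 1 unfolding kappa_def by (simp add: card_insert_disjoint card_image)
  next
    case 2 thus ?thesis using assms(2) by (simp add: kappa_def ins_def)
  next
    case 3
    have im: "i - 1 \<in> {1..m}" using 3 assms by auto
    have si: "\<sigma> (i - 1) \<in> {1..m}" using f(1) im by blast
    have pi: "ins m a \<sigma> i = Suc (\<sigma> (i - 1))" using 3 assms by (auto simp: ins_def)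
    have "{j. 1 \<le> j \<and> j < ins m a \<sigma> i \<and> i < inv (ins m a \<sigma>) j}
      = Suc ` {j. 1 \<le> j \<and> j < \<sigma> (i - 1) \<and> i - 1 < inv \<sigma> j}"
    proof (rule set_eqI, rule iffI)
      fix j assume "j \<in> {j. 1 \<le> j \<and> j < ins m a \<sigma> i \<and> i < inv (ins m a \<sigma>) j}"
      hence j: "1 \<le> j" "j < Suc (\<sigma> (i - 1))" "i < insinv m a \<sigma> j" using pi iv by auto
      have j1: "j \<noteq> 1" using j 3 by (auto simp: insinv_def)
      have jm: "j - 1 \<in> {1..m}" using j j1 si by auto
      have "i - 1 < inv \<sigma> (j - 1)" using j j1 jm 3 by (auto simp: insinv_def split: if_splits)
      thus "j \<in> Suc ` {j. 1 \<le> j \<and> j < \<sigma> (i - 1) \<and> i - 1 < inv \<sigma> j}"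
        using j j1 by (intro image_eqI[where x="j - 1"]) auto
    next
      fix j assume "j \<in> Suc ` {j. 1 \<le> j \<and> j < \<sigma> (i - 1) \<and> i - 1 < inv \<sigma> j}"
      then obtain j' where j': "j = Suc j'" "1 \<le> j'" "j' < \<sigma> (i - 1)" "i - 1 < inv \<sigma> j'" by auto
      have "j' \<le> m" using j' si by auto
      thus "j \<in> {j. 1 \<le> j \<and> j < ins m a \<sigma> i \<and> i < inv (ins m a \<sigma>) j}"
        using j' 3 pi iv by (auto simp: insinv_def)
    qed
    thus ?thesis using 3 unfolding kappa_def by (simp add: card_image)
  qed
qed


definition shift :: "(nat \<Rightarrow> nat) \<Rightarrow> nat \<Rightarrow> nat" where
  "shift t = (\<lambda>k. if k = 0 then 0 else t (Suc k))"
definition tcons :: "nat \<Rightarrow> (nat \<Rightarrow> nat) \<Rightarrow> nat \<Rightarrow> nat" where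
  "tcons a t = (\<lambda>k. if k = 0 then 0 else if k = 1 then a else t (k - 1))"
definition Tab :: "nat \<Rightarrow> (nat \<Rightarrow> nat) set" where
  "Tab n = {t. t 0 = 0 \<and> (\<forall>k. t k \<le> n - k)}"

fun perm_of :: "nat \<Rightarrow> (nat \<Rightarrow> nat) \<Rightarrow> nat \<Rightarrow> nat" where
  "perm_of 0 t = id"
| "perm_of (Suc m) t = ins m (t 1) (perm_of m (shift t))"

lemma Tab_0: "Tab 0 = {\<lambda>_. 0}"
  by (auto simp: Tab_def fun_eq_iff)

lemma Tab_SucD:
  assumes "t \<in> Tab (Suc m)"
  shows "shift t \<in> Tab m" "t 1 \<le> m" "tcons (t 1) (shift t) = t"
proof -
  have t: "t 0 = 0" "\<And>k. t k \<le> Suc m - k" using assms by (auto simp: Tab_def)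
  have "shift t k \<le> m - k" for k using t(2)[of "Suc k"] by (simp add: shift_def)
  thus "shift t \<in> Tab m" by (simp add: Tab_def shift_def)
  show "t 1 \<le> m" using t(2)[of 1] by simp
  show "tcons (t 1) (shift t) = t" using assms unfolding Tab_def tcons_def shift_def
    by (auto simp: fun_eq_iff)
qed

lemma tcons_Tab:
  assumes "t \<in> Tab m" "a \<le> m"
  shows "tcons a t \<in> Tab (Suc m)" "shift (tcons a t) = t" "tcons a t 1 = a"
proof -
  show "tcons a t \<in> Tab (Suc m)" unfolding Tab_def
  proof (intro CollectI conjI allI)
    fix k show "tcons a t k \<le> Suc m - k"
    proof (cases "k \<le> 1")
      case True thus ?thesis using assms by (auto simp: tcons_def)
    next
      case False
      have "t (k - 1) \<le> m - (k - 1)" using assms(1) by (simp add: Tab_def)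
      thus ?thesis using False by (auto simp: tcons_def)
    qed
  qed (simp add: tcons_def)
  show "shift (tcons a t) = t" using assms unfolding Tab_def tcons_def shift_def
    by (auto simp: fun_eq_iff)
  show "tcons a t 1 = a" by (simp add: tcons_def)
qed

lemma Tab_Suc_bij: "bij_betw (\<lambda>t. (t 1, shift t)) (Tab (Suc m)) ({0..m} \<times> Tab m)"
proof (rule bij_betw_byWitness[where f' = "\<lambda>(a, t). tcons a t"])
  show "\<forall>a\<in>Tab (Suc m). (\<lambda>(a, t). tcons a t) (a 1, shift a) = a" using Tab_SucD(3) by auto
  show "\<forall>a\<in>{0..m} \<times> Tab m. (\<lambda>t. (t 1, shift t)) ((\<lambda>(a, t). tcons a t) a) = a"
    using tcons_Tab(2,3) by auto
  show "(\<lambda>t. (t 1, shift t)) ` Tab (Suc m) \<subseteq> {0..m} \<times> Tab m" using Tab_SucD(1,2) by auto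
  show "(\<lambda>(a, t). tcons a t) ` ({0..m} \<times> Tab m) \<subseteq> Tab (Suc m)" using tcons_Tab(1) by auto
qed

lemma Tab_finite_card: "finite (Tab n) \<and> card (Tab n) = fact n"
proof (induction n)
  case 0 thus ?case by (simp add: Tab_0)
next
  case (Suc m)
  have "card (Tab (Suc m)) = card ({0..m} \<times> Tab m)" using bij_betw_same_card[OF Tab_Suc_bij] .
  moreover have "finite (Tab (Suc m))"
    using bij_betw_finite[OF Tab_Suc_bij] Suc by auto
  ultimately show ?case using Suc by (simp add: card_cartesian_product)
qed

lemma Sn_permutes: "w \<in> Sn n \<longleftrightarrow> w permutes {1..n}" by (simp add: Sn_def)

lemma perm_of_Sn: "t \<in> Tab n \<Longrightarrow> perm_of n t \<in> Sn n"
proof (induction n arbitrary: t)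
  case 0 thus ?case by (simp add: Sn_def permutes_id id_def)
next
  case (Suc m)
  thus ?case using Tab_SucD[OF Suc.prems] ins_permutes by (simp add: Sn_def)
qed

lemma iota_out:
  assumes "w \<in> Sn n" "k = 0 \<or> n < k"
  shows "iota w k = 0"
proof -
  have p: "w permutes {1..n}" using assms by (simp add: Sn_def)
  note f = perm_facts[OF p]
  show ?thesis
  proof (cases "k = 0")
    case True thus ?thesis using f(6)[of 0] by (simp add: iota_def)
  next
    case False
    hence k: "n < k" using assms by auto
    have "inv w k = k" using f(6) k by auto
    moreover have "\<not> (i < k \<and> k < w i)" for i
    proof (cases "i \<in> {1..n}")
      case True thus ?thesis using f(1)[OF True] k by auto
    qed (use f(5) in auto)
    ultimately show ?thesis by (simp add: iota_def)
  qed
qed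

lemma kappa_out:
  assumes "w \<in> Sn n" "k = 0 \<or> n < k"
  shows "kappa w k = 0"
proof -
  have p: "w permutes {1..n}" using assms by (simp add: Sn_def)
  note f = perm_facts[OF p]
  show ?thesis
  proof (cases "k = 0")
    case True thus ?thesis using f(5)[of 0] by (simp add: kappa_def)
  next
    case False
    hence k: "n < k" using assms by auto
    have "w k = k" using f(5) k by auto
    moreover have "\<not> (i < k \<and> k < inv w i)" for i
    proof (cases "i \<in> {1..n}")
      case True thus ?thesis using f(2)[OF True] k by auto
    qed (use f(6) in auto)
    ultimately show ?thesis by (simp add: kappa_def)
  qed
qed

lemma iota_Tab:
  assumes "w \<in> Sn n"
  shows "iota w \<in> Tab n"
proof -
  have p: "w permutes {1..n}" using assms by (simp add: Sn_def)
  note f = perm_facts[OF p]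
  have "iota w k \<le> n - k" for k
  proof (cases "k = 0 \<or> n < k")
    case True thus ?thesis using iota_out[OF assms] by simp
  next
    case False
    have "{i. 1 \<le> i \<and> i < inv w k \<and> k < w i} \<subseteq> inv w ` {Suc k..n}"
    proof
      fix i assume i: "i \<in> {i. 1 \<le> i \<and> i < inv w k \<and> k < w i}"
      have "inv w k \<in> {1..n}" using f(2) False by auto
      hence "i \<in> {1..n}" using i by auto
      hence "w i \<in> {Suc k..n}" using f(1) i by auto
      thus "i \<in> inv w ` {Suc k..n}" using f(4) by (metis image_eqI)
    qed
    hence "iota w k \<le> card (inv w ` {Suc k..n})" unfolding iota_def by (intro card_mono) auto
    also have "\<dots> \<le> card {Suc k..n}" by (rule card_image_le) auto
    finally show ?thesis by simp
  qed
  thus ?thesis using iota_out[OF assms] by (simp add: Tab_def)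
qed

lemma iota_perm_of: "t \<in> Tab n \<Longrightarrow> iota (perm_of n t) = t"
proof (induction n arbitrary: t)
  case 0
  have "iota id = (\<lambda>_. 0)" by (auto simp: iota_def fun_eq_iff)
  thus ?case using 0 by (simp add: Tab_0 id_def)
next
  case (Suc m)
  note D = Tab_SucD[OF Suc.prems]
  define \<sigma> where "\<sigma> = perm_of m (shift t)"
  have s: "\<sigma> permutes {1..m}" using perm_of_Sn[OF D(1)] by (simp add: Sn_def \<sigma>_def)
  have ih: "iota \<sigma> = shift t" using Suc.IH[OF D(1)] by (simp add: \<sigma>_def)
  have pS: "perm_of (Suc m) t \<in> Sn (Suc m)" using perm_of_Sn[OF Suc.prems] .
  show ?case
  proof
    fix k
    consider "k = 0 \<or> Suc m < k" | "k = 1" | "k \<noteq> 0" "k \<noteq> 1" "k \<le> Suc m" by linarith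
    thus "iota (perm_of (Suc m) t) k = t k"
    proof cases
      case 1
      have "t k = 0" using 1 Suc.prems unfolding Tab_def
        by (metis (mono_tags, lifting) diff_is_0_eq le_zero_eq less_imp_le_nat mem_Collect_eq)
      thus ?thesis using iota_out[OF pS 1] by simp
    next
      case 2 thus ?thesis using iota_ins_1[OF s D(2)] by (simp add: \<sigma>_def)
    next
      case 3
      then obtain k' where k': "k = Suc k'" "k' \<in> {1..m}" by (cases k) auto
      have "iota (perm_of (Suc m) t) k = iota \<sigma> k'" using iota_ins_Suc[OF s D(2) k'(2)] k' by (simp add: \<sigma>_def)
      also have "\<dots> = t k" using ih k' by (simp add: shift_def)
      finally show ?thesis .
    qed
  qed
qed

lemma Sn_finite_card: "finite (Sn n) \<and> card (Sn n) = fact n"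
  unfolding Sn_def using card_permutations[of "{1..n}" n] finite_permutations[of "{1..n}"] by simp

lemma perm_of_bij: "bij_betw (perm_of n) (Tab n) (Sn n)"
proof -
  have inj: "inj_on (perm_of n) (Tab n)" by (metis inj_onI iota_perm_of)
  have sub: "perm_of n ` Tab n \<subseteq> Sn n" using perm_of_Sn by auto
  have "card (perm_of n ` Tab n) = card (Sn n)" using card_image[OF inj] Tab_finite_card Sn_finite_card by simp
  hence "perm_of n ` Tab n = Sn n" using card_subset_eq[OF _ sub] Sn_finite_card by blast
  thus ?thesis using inj by (simp add: bij_betw_def)
qed

lemma perm_of_iota: "w \<in> Sn n \<Longrightarrow> perm_of n (iota w) = w"
  using perm_of_bij[of n] iota_perm_of by (metis bij_betw_imp_surj_on imageE)

lemma iota_inj: "w \<in> Sn n \<Longrightarrow> v \<in> Sn n \<Longrightarrow> iota w = iota v \<Longrightarrow> w = v"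
  by (metis perm_of_iota)

lemma kappa_perm_of_Suc:
  assumes "t \<in> Tab (Suc m)" "i \<in> {1..Suc m}"
  shows "kappa (perm_of (Suc m) t) i = (if i \<le> t 1 then Suc (kappa (perm_of m (shift t)) i)
     else if i = Suc (t 1) then 0 else kappa (perm_of m (shift t)) (i - 1))"
proof -
  note D = Tab_SucD[OF assms(1)]
  have s: "perm_of m (shift t) permutes {1..m}" using perm_of_Sn[OF D(1)] by (simp add: Sn_def)
  show ?thesis using kappa_ins[OF s D(2) assms(2)] by simp
qed


definition K :: "nat \<Rightarrow> (nat \<Rightarrow> nat) \<Rightarrow> nat \<Rightarrow> nat" where
  "K n t = kappa (perm_of n t)"

definition SS :: "nat \<Rightarrow> (nat \<Rightarrow> nat) \<Rightarrow> (nat \<Rightarrow> nat) \<Rightarrow> (nat \<Rightarrow> nat) set" where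
  "SS n zt c = {t \<in> Tab n. (\<forall>k. t k \<le> zt k \<and> zt k \<le> Suc (t k)) \<and> (\<forall>i\<in>{1..n}. c i \<le> K n t i)}"

definition isbox :: "(nat \<Rightarrow> nat) \<Rightarrow> (nat \<Rightarrow> nat) set \<Rightarrow> bool" where
  "isbox zt S \<longleftrightarrow> S = {} \<or> (\<exists>lo hi. lo \<le> hi \<and> hi \<le> zt \<and> (\<forall>k. zt k \<le> Suc (lo k)) \<and> S = {t. lo \<le> t \<and> t \<le> hi})"

definition cshift :: "(nat \<Rightarrow> nat) \<Rightarrow> nat \<Rightarrow> nat \<Rightarrow> nat" where
  "cshift c a = (\<lambda>i. if i \<le> a then c i - 1 else c (Suc i))"

lemma tcons_le_iff: assumes "lo' 0 = 0" shows "(tcons a lo' \<le> t \<longleftrightarrow> a \<le> t 1 \<and> lo' \<le> shift t)"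
proof
  assume "tcons a lo' \<le> t"
  hence h: "\<And>k. tcons a lo' k \<le> t k" by (simp add: le_fun_def)
  have "a \<le> t 1" using h[of 1] by (simp add: tcons_def)
  moreover have "lo' x \<le> shift t x" for x
  proof (cases x)
    case (Suc y) thus ?thesis using h[of "Suc x"] by (simp add: tcons_def shift_def)
  qed (use \<open>lo' 0 = 0\<close> in simp)
  ultimately show "a \<le> t 1 \<and> lo' \<le> shift t" by (simp add: le_fun_def)
next
  assume h: "a \<le> t 1 \<and> lo' \<le> shift t"
  have "tcons a lo' k \<le> t k" for k
  proof (cases k)
    case 0 thus ?thesis by (simp add: tcons_def)
  next
    case (Suc x)
    show ?thesis
    proof (cases x)
      case 0 thus ?thesis using h Suc by (simp add: tcons_def)
    next
      case (Suc y) thus ?thesis using h \<open>k = Suc x\<close> le_funD[of lo' "shift t" x] by (simp add: tcons_def shift_def)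
    qed
  qed
  thus "tcons a lo' \<le> t" by (simp add: le_fun_def)
qed

lemma le_tcons_iff: "(t \<le> tcons a hi' \<longleftrightarrow> t 0 = 0 \<and> t 1 \<le> a \<and> shift t \<le> hi')"
proof
  assume "t \<le> tcons a hi'"
  hence h: "\<And>k. t k \<le> tcons a hi' k" by (simp add: le_fun_def)
  have "t 0 = 0" "t 1 \<le> a" using h[of 0] h[of 1] by (auto simp: tcons_def)
  moreover have "shift t x \<le> hi' x" for x
  proof (cases x)
    case (Suc y) thus ?thesis using h[of "Suc x"] by (simp add: tcons_def shift_def)
  qed (simp add: shift_def)
  ultimately show "t 0 = 0 \<and> t 1 \<le> a \<and> shift t \<le> hi'" by (simp add: le_fun_def)
next
  assume h: "t 0 = 0 \<and> t 1 \<le> a \<and> shift t \<le> hi'"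
  have "t k \<le> tcons a hi' k" for k
  proof (cases k)
    case 0 thus ?thesis using h by (simp add: tcons_def)
  next
    case (Suc x)
    show ?thesis
    proof (cases x)
      case 0 thus ?thesis using h Suc by (simp add: tcons_def)
    next
      case (Suc y) thus ?thesis using h \<open>k = Suc x\<close> le_funD[of "shift t" hi' x] by (simp add: tcons_def shift_def)
    qed
  qed
  thus "t \<le> tcons a hi'" by (simp add: le_fun_def)
qed

lemma SS_Suc_iff:
  assumes zt: "zt \<in> Tab (Suc m)"
  shows "t \<in> SS (Suc m) zt c \<longleftrightarrow> t 0 = 0 \<and> t 1 \<le> zt 1 \<and> zt 1 \<le> Suc (t 1) \<and> c (Suc (t 1)) = 0
     \<and> shift t \<in> SS m (shift zt) (cshift c (t 1))"
proof
  assume t: "t \<in> SS (Suc m) zt c"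
  have tT: "t \<in> Tab (Suc m)" and cube: "\<And>k. t k \<le> zt k \<and> zt k \<le> Suc (t k)"
    and kc: "\<And>i. i \<in> {1..Suc m} \<Longrightarrow> c i \<le> K (Suc m) t i" using t by (auto simp: SS_def)
  note D = Tab_SucD[OF tT]
  have t0: "t 0 = 0" using tT by (simp add: Tab_def)
  have Kf: "\<And>i. i \<in> {1..Suc m} \<Longrightarrow> K (Suc m) t i = (if i \<le> t 1 then Suc (K m (shift t) i)
     else if i = Suc (t 1) then 0 else K m (shift t) (i - 1))"
    using kappa_perm_of_Suc[OF tT] by (simp add: K_def)
  have "c (Suc (t 1)) = 0" using kc[of "Suc (t 1)"] Kf[of "Suc (t 1)"] D(2) by simp
  moreover have "shift t \<in> SS m (shift zt) (cshift c (t 1))"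
    unfolding SS_def
  proof (intro CollectI conjI allI ballI)
    show "shift t \<in> Tab m" by (rule D(1))
    fix k
    show "shift t k \<le> shift zt k" "shift zt k \<le> Suc (shift t k)" using cube[of "Suc k"] by (auto simp: shift_def)
  next
    fix i assume i: "i \<in> {1..m}"
    show "cshift c (t 1) i \<le> K m (shift t) i"
    proof (cases "i \<le> t 1")
      case True thus ?thesis using kc[of i] Kf[of i] i by (auto simp: cshift_def)
    next
      case False thus ?thesis using kc[of "Suc i"] Kf[of "Suc i"] i by (auto simp: cshift_def)
    qed
  qed
  ultimately show "t 0 = 0 \<and> t 1 \<le> zt 1 \<and> zt 1 \<le> Suc (t 1) \<and> c (Suc (t 1)) = 0
     \<and> shift t \<in> SS m (shift zt) (cshift c (t 1))" using t0 cube[of 1] by simp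
next
  assume H: "t 0 = 0 \<and> t 1 \<le> zt 1 \<and> zt 1 \<le> Suc (t 1) \<and> c (Suc (t 1)) = 0
     \<and> shift t \<in> SS m (shift zt) (cshift c (t 1))"
  have st: "shift t \<in> Tab m" and scube: "\<And>k. shift t k \<le> shift zt k \<and> shift zt k \<le> Suc (shift t k)"
    and skc: "\<And>i. i \<in> {1..m} \<Longrightarrow> cshift c (t 1) i \<le> K m (shift t) i" using H by (auto simp: SS_def)
  have t1: "t 1 \<le> m" using H Tab_SucD(2)[OF zt] by simp
  have teq: "tcons (t 1) (shift t) = t" using H by (auto simp: tcons_def shift_def fun_eq_iff)
  have tT: "t \<in> Tab (Suc m)" using tcons_Tab(1)[OF st t1] teq by simp
  have zt0: "zt 0 = 0" using zt by (simp add: Tab_def)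
  have Kf: "\<And>i. i \<in> {1..Suc m} \<Longrightarrow> K (Suc m) t i = (if i \<le> t 1 then Suc (K m (shift t) i)
     else if i = Suc (t 1) then 0 else K m (shift t) (i - 1))"
    using kappa_perm_of_Suc[OF tT] by (simp add: K_def)
  have cube: "t k \<le> zt k \<and> zt k \<le> Suc (t k)" for k
  proof (cases k)
    case 0 thus ?thesis using H zt0 by simp
  next
    case (Suc k')
    show ?thesis
    proof (cases k')
      case 0 thus ?thesis using H Suc by simp
    next
      case (Suc k'') thus ?thesis using scube[of k'] \<open>k = Suc k'\<close> by (simp add: shift_def)
    qed
  qed
  have "c i \<le> K (Suc m) t i" if i: "i \<in> {1..Suc m}" for i
  proof -
    consider "i \<le> t 1" | "i = Suc (t 1)" | "Suc (t 1) < i" by linarith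
    thus ?thesis
    proof cases
      case 1 thus ?thesis using skc[of i] Kf[OF i] i t1 by (auto simp: cshift_def)
    next
      case 2 thus ?thesis using H Kf[OF i] by simp
    next
      case 3
      have "i - 1 \<in> {1..m}" using 3 i by auto
      moreover have "\<not> (i - 1 \<le> t 1)" "Suc (i - 1) = i" using 3 by auto
      ultimately show ?thesis using skc[of "i - 1"] Kf[OF i] 3 by (simp add: cshift_def)
    qed
  qed
  thus "t \<in> SS (Suc m) zt c" using tT cube by (simp add: SS_def)
qed

lemma cshift_eq:
  assumes "c z = 0" "c (Suc z) = 0" "z \<ge> 1"
  shows "cshift c (z - 1) = cshift c z"
proof
  fix i
  consider "i \<le> z - 1" | "i = z" | "z < i" by linarith
  thus "cshift c (z - 1) i = cshift c z i"
  proof cases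
    case 2 thus ?thesis using assms by (simp add: cshift_def)
  qed (use assms in \<open>auto simp: cshift_def\<close>)
qed

lemma box_lemma: "zt \<in> Tab n \<Longrightarrow> isbox zt (SS n zt c)"
proof (induction n arbitrary: zt c)
  case 0
  hence z: "zt = (\<lambda>_. 0)" by (simp add: Tab_0)
  have "SS 0 zt c = {\<lambda>_. 0}" by (auto simp: SS_def Tab_0 z)
  moreover have "{t. (\<lambda>_. 0::nat) \<le> t \<and> t \<le> (\<lambda>_. 0)} = {\<lambda>_. 0}" by (auto simp: le_fun_def fun_eq_iff)
  ultimately show ?case unfolding isbox_def using z by (intro disjI2 exI[of _ "\<lambda>_. 0"]) auto
next
  case (Suc m)
  note D = Tab_SucD[OF Suc.prems]
  define z1 where "z1 = zt 1"
  define zt' where "zt' = shift zt"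
  have z1m: "z1 \<le> m" using D(2) by (simp add: z1_def)
  define A where "A = {a. a \<le> z1 \<and> z1 \<le> Suc a \<and> c (Suc a) = 0 \<and> SS m zt' (cshift c a) \<noteq> {}}"
  have SSeq: "SS (Suc m) zt c = {t. t 0 = 0 \<and> t 1 \<in> A \<and> shift t \<in> SS m zt' (cshift c (t 1))}"
    using SS_Suc_iff[OF Suc.prems] by (auto simp: A_def z1_def zt'_def)
  show ?case
  proof (cases "A = {}")
    case True thus ?thesis using SSeq by (simp add: isbox_def)
  next
    case False
    have "\<exists>alo ahi. A = {alo..ahi} \<and> alo \<le> ahi \<and> ahi \<le> z1 \<and> z1 \<le> Suc alo \<and> (\<forall>a\<in>A. cshift c a = cshift c ahi)"
    proof (cases "z1 \<ge> 1 \<and> z1 - 1 \<in> A \<and> z1 \<in> A")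
      case True
      have "cshift c (z1 - 1) = cshift c z1"
        using True by (intro cshift_eq) (auto simp: A_def)
      moreover have "A = {z1 - 1..z1}"
      proof
        show "A \<subseteq> {z1 - 1..z1}" by (auto simp: A_def)
        show "{z1 - 1..z1} \<subseteq> A"
        proof
          fix b assume "b \<in> {z1 - 1..z1}"
          hence "b = z1 - 1 \<or> b = z1" by auto
          thus "b \<in> A" using True by auto
        qed
      qed
      moreover have "\<forall>a\<in>A. cshift c a = cshift c z1"
      proof
        fix a assume "a \<in> A"
        hence "a = z1 - 1 \<or> a = z1" using \<open>A = {z1 - 1..z1}\<close> by auto
        thus "cshift c a = cshift c z1" using \<open>cshift c (z1 - 1) = cshift c z1\<close> by auto
      qed
      moreover have "z1 - 1 \<le> z1" "z1 \<le> Suc (z1 - 1)" using True by auto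
      ultimately show ?thesis by blast
    next
      case F: False
      obtain a where a: "a \<in> A" using False by auto
      have "A = {a}"
      proof
        show "A \<subseteq> {a}"
        proof
          fix b assume b: "b \<in> A"
          have ab: "a = z1 - 1 \<or> a = z1" "b = z1 - 1 \<or> b = z1" using a b by (auto simp: A_def)
          show "b \<in> {a}"
          proof (rule ccontr)
            assume "b \<notin> {a}"
            hence "z1 \<ge> 1 \<and> z1 - 1 \<in> A \<and> z1 \<in> A" using ab a b by auto
            thus False using F by blast
          qed
        qed
      qed (use a in auto)
      moreover have "a \<le> z1 \<and> z1 \<le> Suc a" using a by (auto simp: A_def)
      ultimately show ?thesis by (intro exI[of _ a] exI[of _ a]) auto
    qed
    then obtain alo ahi where A: "A = {alo..ahi}" "alo \<le> ahi" "ahi \<le> z1" "z1 \<le> Suc alo"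
      and ceq: "\<And>a. a \<in> A \<Longrightarrow> cshift c a = cshift c ahi" by blast
    have ahiA: "ahi \<in> A" using A by auto
    have ne: "SS m zt' (cshift c ahi) \<noteq> {}" using ahiA by (auto simp: A_def)
    have "isbox zt' (SS m zt' (cshift c ahi))" using Suc.IH[OF D(1)] by (simp add: zt'_def)
    then obtain lo' hi' where box': "lo' \<le> hi'" "hi' \<le> zt'" "\<And>k. zt' k \<le> Suc (lo' k)"
      "SS m zt' (cshift c ahi) = {t. lo' \<le> t \<and> t \<le> hi'}" using ne unfolding isbox_def by blast
    have zt'0: "zt' 0 = 0" by (simp add: zt'_def shift_def)
    have lo'0: "lo' 0 = 0" using box'(1,2) zt'0 by (metis le_funD le_zero_eq order.trans)
    have SSeq2: "SS (Suc m) zt c = {t. tcons alo lo' \<le> t \<and> t \<le> tcons ahi hi'}"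
    proof -
      have "t \<in> SS (Suc m) zt c \<longleftrightarrow> t \<in> {t. tcons alo lo' \<le> t \<and> t \<le> tcons ahi hi'}" for t
      proof -
        have "t \<in> SS (Suc m) zt c \<longleftrightarrow> t 0 = 0 \<and> t 1 \<in> A \<and> shift t \<in> SS m zt' (cshift c ahi)"
          using SSeq ceq by auto
        also have "\<dots> \<longleftrightarrow> t 0 = 0 \<and> alo \<le> t 1 \<and> t 1 \<le> ahi \<and> lo' \<le> shift t \<and> shift t \<le> hi'"
          using A box'(4) by auto
        also have "\<dots> \<longleftrightarrow> t \<in> {t. tcons alo lo' \<le> t \<and> t \<le> tcons ahi hi'}"
          using tcons_le_iff[of lo', OF lo'0] le_tcons_iff by auto
        finally show ?thesis .
      qed
      thus ?thesis by blast
    qed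
    have zteq: "zt = tcons z1 zt'" using D(3) by (simp add: z1_def zt'_def)
    have p1: "tcons alo lo' \<le> tcons ahi hi'" using box'(1) A(2) unfolding le_fun_def tcons_def by auto
    have p2: "tcons ahi hi' \<le> zt" using box'(2) A(3) zteq unfolding le_fun_def tcons_def by auto
    have p3: "\<forall>k. zt k \<le> Suc (tcons alo lo' k)" using box'(3) A(4) zteq unfolding tcons_def by auto
    show ?thesis unfolding isbox_def using p1 p2 p3 SSeq2 by blast
  qed
qed


definition tsize :: "nat \<Rightarrow> (nat \<Rightarrow> nat) \<Rightarrow> nat" where
  "tsize n t = (\<Sum>k=1..n. t k)"

lemma iota_size_tsize: "iota_size n w = tsize n (iota w)"
  by (simp add: iota_size_def tsize_def)

lemma inv_sum_zero:
  fixes f :: "'b \<Rightarrow> complex"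
  assumes "finite S" "\<And>x. x \<in> S \<Longrightarrow> g x \<in> S" "\<And>x. x \<in> S \<Longrightarrow> g (g x) = x"
    "\<And>x. x \<in> S \<Longrightarrow> f (g x) = - f x"
  shows "sum f S = 0"
proof -
  have b: "bij_betw g S S" by (rule bij_betw_byWitness[where f' = g]) (use assms in auto)
  have "sum (\<lambda>x. f (g x)) S = sum f S" by (rule sum.reindex_bij_betw[OF b])
  moreover have "sum (\<lambda>x. f (g x)) S = - sum f S" using assms(4) by (simp add: sum_negf)
  ultimately show ?thesis by simp
qed

lemma tsize_upd:
  assumes "k \<in> {1..n}"
  shows "tsize n (t(k := v)) + t k = tsize n t + v"
proof -
  have "tsize n (t(k := v)) = v + (\<Sum>j\<in>{1..n} - {k}. t j)"
    unfolding tsize_def using assms by (simp add: sum.remove)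
  moreover have "tsize n t = t k + (\<Sum>j\<in>{1..n} - {k}. t j)"
    unfolding tsize_def using assms by (simp add: sum.remove)
  ultimately show ?thesis by simp
qed

lemma tsize_mono: "t \<le> s \<Longrightarrow> tsize n t \<le> tsize n s"
  unfolding tsize_def by (intro sum_mono) (simp add: le_fun_def)

lemma neg1_pow_diff: "b \<le> a \<Longrightarrow> (-1::complex) ^ (a - b) = (-1) ^ a * (-1) ^ b"
proof -
  assume "b \<le> a"
  hence "(-1::complex) ^ a = (-1) ^ (a - b) * (-1) ^ b" by (simp add: power_add[symmetric])
  moreover have "(-1::complex) ^ b * (-1) ^ b = 1" by (simp add: power_mult_distrib[symmetric])
  ultimately show ?thesis by (metis mult.assoc mult.right_neutral)
qed

lemma Tab_finite: "finite (Tab n)" using Tab_finite_card by simp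

lemma box_sub_Tab: "hi \<in> Tab n \<Longrightarrow> {t. lo \<le> t \<and> t \<le> hi} \<subseteq> Tab n"
proof
  fix t assume hi: "hi \<in> Tab n" and "t \<in> {t. lo \<le> t \<and> t \<le> hi}"
  hence th: "\<And>k. t k \<le> hi k" by (simp add: le_fun_def)
  have "t 0 = 0" using th[of 0] hi by (simp add: Tab_def)
  moreover have "t k \<le> n - k" for k using th[of k] hi unfolding Tab_def by (auto intro: order.trans)
  ultimately show "t \<in> Tab n" by (simp add: Tab_def)
qed

lemma box_sum:
  assumes hi: "hi \<in> Tab n" and lh: "lo \<le> hi" and h1: "\<And>k. hi k \<le> Suc (lo k)"
  shows "(\<Sum>t\<in>{t. lo \<le> t \<and> t \<le> hi}. (-1::complex) ^ tsize n t) = (if lo = hi then (-1) ^ tsize n lo else 0)"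
proof (cases "lo = hi")
  case True
  hence "{t. lo \<le> t \<and> t \<le> hi} = {lo}" by auto
  thus ?thesis using True by simp
next
  case False
  then obtain k where k: "lo k \<noteq> hi k" by auto
  have "lo k \<le> hi k" by (rule le_funD[OF lh])
  hence kk: "hi k = Suc (lo k)" using k h1[of k] by linarith
  have "hi 0 = 0" "hi k \<le> n - k" using hi by (auto simp: Tab_def)
  hence kn: "k \<in> {1..n}" using kk by (cases k) auto
  define S where "S = {t. lo \<le> t \<and> t \<le> hi}"
  define g where "g = (\<lambda>t::nat \<Rightarrow> nat. t(k := lo k + hi k - t k))"
  have fin: "finite S" unfolding S_def using finite_subset[OF box_sub_Tab[OF hi] Tab_finite] .
  have tk: "t k = lo k \<or> t k = hi k" if "t \<in> S" for t
  proof -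
    have "lo k \<le> t k" "t k \<le> hi k" using that unfolding S_def le_fun_def by auto
    thus ?thesis using kk by linarith
  qed
  have gS: "g t \<in> S" if "t \<in> S" for t
  proof -
    have "lo \<le> g t" "g t \<le> hi" using that tk[OF that] kk unfolding S_def g_def le_fun_def by auto
    thus ?thesis by (simp add: S_def)
  qed
  have gg: "g (g t) = t" if "t \<in> S" for t
    using tk[OF that] kk unfolding g_def by (auto simp: fun_eq_iff)
  have gf: "(-1::complex) ^ tsize n (g t) = - ((-1) ^ tsize n t)" if "t \<in> S" for t
  proof -
    have e: "tsize n (g t) + t k = tsize n t + (lo k + hi k - t k)"
      unfolding g_def by (rule tsize_upd[OF kn])
    from tk[OF that] show ?thesis
    proof
      assume "t k = lo k"
      hence "tsize n (g t) = Suc (tsize n t)" using e kk by simp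
      thus ?thesis by simp
    next
      assume "t k = hi k"
      hence "tsize n t = Suc (tsize n (g t))" using e kk by simp
      thus ?thesis by simp
    qed
  qed
  have "(\<Sum>t\<in>S. (-1::complex) ^ tsize n t) = 0"
    by (rule inv_sum_zero[where g = g]) (use fin gS gg gf in auto)
  thus ?thesis using False by (simp add: S_def)
qed

lemma Cvee_iff:
  assumes "z \<in> Sn n"
  shows "y \<in> Cvee n z \<longleftrightarrow> y \<in> Sn n \<and> (\<forall>k. iota y k \<le> iota z k \<and> iota z k \<le> Suc (iota y k))"
proof -
  have "(\<forall>k\<in>{1..n}. iota z k \<le> iota y k + 1 \<and> iota y k \<le> iota z k) \<longleftrightarrow>
        (\<forall>k. iota y k \<le> iota z k \<and> iota z k \<le> Suc (iota y k))" if "y \<in> Sn n"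
  proof
    assume h: "\<forall>k\<in>{1..n}. iota z k \<le> iota y k + 1 \<and> iota y k \<le> iota z k"
    show "\<forall>k. iota y k \<le> iota z k \<and> iota z k \<le> Suc (iota y k)"
    proof
      fix k show "iota y k \<le> iota z k \<and> iota z k \<le> Suc (iota y k)"
      proof (cases "k = 0 \<or> n < k")
        case True thus ?thesis using iota_out[OF that True] iota_out[OF assms True] by simp
      next
        case False thus ?thesis using h by auto
      qed
    qed
  qed auto
  thus ?thesis unfolding Cvee_def by auto
qed

definition Sp :: "nat \<Rightarrow> (nat \<Rightarrow> nat) \<Rightarrow> (nat \<Rightarrow> nat) \<Rightarrow> (nat \<Rightarrow> nat) set" where
  "Sp n z c = {y \<in> Cvee n z. \<forall>k\<in>{1..n}. c k \<le> kappa y k}"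

lemma Sp_image:
  assumes z: "z \<in> Sn n"
  shows "bij_betw (perm_of n) (SS n (iota z) c) (Sp n z c)"
proof -
  have sub: "SS n (iota z) c \<subseteq> Tab n" by (auto simp: SS_def)
  have "perm_of n ` SS n (iota z) c = Sp n z c"
  proof
    show "perm_of n ` SS n (iota z) c \<subseteq> Sp n z c"
    proof
      fix y assume "y \<in> perm_of n ` SS n (iota z) c"
      then obtain t where t: "t \<in> SS n (iota z) c" "y = perm_of n t" by auto
      have tT: "t \<in> Tab n" using t by (simp add: SS_def)
      have yS: "y \<in> Sn n" using perm_of_Sn[OF tT] t by simp
      have it: "iota y = t" using iota_perm_of[OF tT] t by simp
      show "y \<in> Sp n z c" using t yS it unfolding Sp_def Cvee_iff[OF z] SS_def K_def by auto
    qed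
  next
    show "Sp n z c \<subseteq> perm_of n ` SS n (iota z) c"
    proof
      fix y assume y: "y \<in> Sp n z c"
      have yS: "y \<in> Sn n" using y Cvee_iff[OF z] by (simp add: Sp_def)
      have "iota y \<in> SS n (iota z) c"
        using y iota_Tab[OF yS] perm_of_iota[OF yS] unfolding Sp_def Cvee_iff[OF z] SS_def K_def by auto
      thus "y \<in> perm_of n ` SS n (iota z) c" using perm_of_iota[OF yS] by (metis image_eqI)
    qed
  qed
  thus ?thesis using bij_betw_subset[OF perm_of_bij sub] by blast
qed

lemma Sp_sum:
  assumes z: "z \<in> Sn n"
  shows "(\<Sum>y\<in>Sp n z c. (-1::complex) ^ (iota_size n z - iota_size n y)) =
    (if card (Sp n z c) = 1 then (-1::complex) ^ (iota_size n z - iota_size n (THE y. y \<in> Sp n z c)) else 0)"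
proof (cases "card (Sp n z c) = 1")
  case True
  then obtain y0 where "Sp n z c = {y0}" by (rule card_1_singletonE)
  thus ?thesis by simp
next
  case False
  note bij = Sp_image[OF z, of c]
  have "(\<Sum>y\<in>Sp n z c. (-1::complex) ^ (iota_size n z - iota_size n y))
      = (\<Sum>t\<in>SS n (iota z) c. (-1::complex) ^ (iota_size n z - iota_size n (perm_of n t)))"
    using sum.reindex_bij_betw[OF bij, symmetric] by simp
  also have "\<dots> = (\<Sum>t\<in>SS n (iota z) c. (-1::complex) ^ (tsize n (iota z) - tsize n t))"
    by (intro sum.cong refl) (simp add: iota_size_tsize iota_perm_of SS_def)
  also have "\<dots> = 0"
  proof -
    have zt: "iota z \<in> Tab n" by (rule iota_Tab[OF z])
    from box_lemma[OF zt, of c] show ?thesis unfolding isbox_def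
    proof
      assume "SS n (iota z) c = {}" thus ?thesis by simp
    next
      assume "\<exists>lo hi. lo \<le> hi \<and> hi \<le> iota z \<and> (\<forall>k. iota z k \<le> Suc (lo k)) \<and> SS n (iota z) c = {t. lo \<le> t \<and> t \<le> hi}"
      then obtain lo hi where b: "lo \<le> hi" "hi \<le> iota z" "\<And>k. iota z k \<le> Suc (lo k)" "SS n (iota z) c = {t. lo \<le> t \<and> t \<le> hi}"
        by blast
      have hiT: "hi \<in> Tab n" using box_sub_Tab[OF zt, of hi] b(2) by auto
      have ne: "lo \<noteq> hi"
      proof
        assume "lo = hi"
        hence "SS n (iota z) c = {lo}" using b(4) by auto
        hence "card (Sp n z c) = 1" using bij_betw_same_card[OF bij] by simp
        thus False using False by simp
      qed
      have h1: "hi k \<le> Suc (lo k)" for k using le_funD[OF b(2), of k] b(3)[of k] by linarith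
      have "(\<Sum>t\<in>SS n (iota z) c. (-1::complex) ^ (tsize n (iota z) - tsize n t))
          = (\<Sum>t\<in>{t. lo \<le> t \<and> t \<le> hi}. (-1::complex) ^ tsize n (iota z) * (-1) ^ tsize n t)"
        using b(2,4) by (intro sum.cong refl neg1_pow_diff tsize_mono) (auto intro: order.trans)
      also have "\<dots> = (-1::complex) ^ tsize n (iota z) * (\<Sum>t\<in>{t. lo \<le> t \<and> t \<le> hi}. (-1) ^ tsize n t)"
        by (simp add: sum_distrib_left)
      also have "\<dots> = 0" using box_sum[OF hiT b(1) h1] ne by simp
      finally show ?thesis .
    qed
  qed
  finally show ?thesis using False by simp
qed


lemma inner_sum:
  assumes y: "y \<in> Sn n" and u: "u \<in> Sn n"
  shows "(\<Sum>z\<in>{z \<in> Sn n. iota z \<le> iota u}. (if y \<in> Cvee n z then (-1::complex) ^ (iota_size n z - iota_size n y) else 0))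
     = (if y = u then 1 else 0)"
proof -
  have finS: "finite (Sn n)" using Sn_finite_card by simp
  define Z where "Z = {z \<in> Sn n. iota z \<le> iota u \<and> y \<in> Cvee n z}"
  have "(\<Sum>z\<in>{z \<in> Sn n. iota z \<le> iota u}. (if y \<in> Cvee n z then (-1::complex) ^ (iota_size n z - iota_size n y) else 0))
      = (\<Sum>z\<in>Z. (-1::complex) ^ (iota_size n z - iota_size n y))"
  proof -
    have e: "{z \<in> Sn n. iota z \<le> iota u} \<inter> {z. y \<in> Cvee n z} = Z" by (auto simp: Z_def)
    have fin2: "finite {z \<in> Sn n. iota z \<le> iota u}" using finS by simp
    show ?thesis using sum.inter_restrict[OF fin2, of "\<lambda>z. (-1::complex) ^ (iota_size n z - iota_size n y)" "{z. y \<in> Cvee n z}"] e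
      by simp
  qed
  also have "\<dots> = (if y = u then 1 else 0)"
  proof (cases "iota y \<le> iota u")
    case False
    have "Z = {}"
    proof (rule ccontr)
      assume "Z \<noteq> {}"
      then obtain z where z: "z \<in> Sn n" "iota z \<le> iota u" "y \<in> Cvee n z" by (auto simp: Z_def)
      have "iota y \<le> iota z" using Cvee_iff[OF z(1)] z(3) by (simp add: le_fun_def)
      thus False using False z(2) by (meson order.trans)
    qed
    moreover have "y \<noteq> u" using False by auto
    ultimately show ?thesis by simp
  next
    case True
    define ty where "ty = iota y"
    define tu where "tu = iota u"
    define hi where "hi = (\<lambda>k. min (Suc (ty k)) (tu k))"
    have tuT: "tu \<in> Tab n" using iota_Tab[OF u] by (simp add: tu_def)
    have hitu: "hi \<le> tu" by (simp add: hi_def le_fun_def)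
    have hiT: "hi \<in> Tab n"
    proof -
      have hk: "hi k \<le> tu k" for k using hitu by (simp add: le_fun_def)
      have "hi 0 = 0" using hk[of 0] tuT by (simp add: Tab_def)
      moreover have "hi k \<le> n - k" for k using hk[of k] tuT unfolding Tab_def by (auto intro: order.trans)
      ultimately show ?thesis by (simp add: Tab_def)
    qed
    have lh: "ty \<le> hi" using True by (simp add: hi_def le_fun_def ty_def tu_def)
    have h1: "\<And>k. hi k \<le> Suc (ty k)" by (simp add: hi_def)
    define B where "B = {s. ty \<le> s \<and> s \<le> hi}"
    have BT: "B \<subseteq> Tab n" using box_sub_Tab[OF hiT] by (simp add: B_def)
    have img: "perm_of n ` B = Z"
    proof
      show "perm_of n ` B \<subseteq> Z"
      proof
        fix z assume "z \<in> perm_of n ` B"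
        then obtain s where s: "s \<in> B" "z = perm_of n s" by auto
        have sT: "s \<in> Tab n" using s BT by auto
        have zS: "z \<in> Sn n" using perm_of_Sn[OF sT] s by simp
        have iz: "iota z = s" using iota_perm_of[OF sT] s by simp
        have "iota z \<le> iota u" using s(1) iz hitu unfolding B_def tu_def by (auto intro: order.trans)
        moreover have "y \<in> Cvee n z" unfolding Cvee_iff[OF zS] using y s(1) iz h1 unfolding B_def ty_def le_fun_def
          by (auto intro: order.trans)
        ultimately show "z \<in> Z" using zS by (simp add: Z_def)
      qed
    next
      show "Z \<subseteq> perm_of n ` B"
      proof
        fix z assume z: "z \<in> Z"
        have zS: "z \<in> Sn n" using z by (simp add: Z_def)
        have c: "\<And>k. iota y k \<le> iota z k \<and> iota z k \<le> Suc (iota y k)" using z Cvee_iff[OF zS] by (simp add: Z_def)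
        have "iota z \<le> iota u" using z by (simp add: Z_def)
        hence "iota z \<in> B" using c unfolding B_def hi_def ty_def tu_def le_fun_def by auto
        thus "z \<in> perm_of n ` B" using perm_of_iota[OF zS] by (metis image_eqI)
      qed
    qed
    have bij: "bij_betw (perm_of n) B Z" using bij_betw_subset[OF perm_of_bij BT img] .
    have "(\<Sum>z\<in>Z. (-1::complex) ^ (iota_size n z - iota_size n y))
        = (\<Sum>s\<in>B. (-1::complex) ^ (iota_size n (perm_of n s) - iota_size n y))"
      using sum.reindex_bij_betw[OF bij, symmetric] by simp
    also have "\<dots> = (\<Sum>s\<in>B. (-1::complex) ^ tsize n s * (-1) ^ tsize n ty)"
    proof (intro sum.cong refl)
      fix s assume s: "s \<in> B"
      have sT: "s \<in> Tab n" using s BT by auto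
      have "tsize n ty \<le> tsize n s" using s by (intro tsize_mono) (simp add: B_def)
      thus "(-1::complex) ^ (iota_size n (perm_of n s) - iota_size n y) = (-1) ^ tsize n s * (-1) ^ tsize n ty"
        by (simp add: iota_size_tsize iota_perm_of[OF sT] ty_def neg1_pow_diff)
    qed
    also have "\<dots> = (\<Sum>s\<in>B. (-1::complex) ^ tsize n s) * (-1) ^ tsize n ty"
      by (simp add: sum_distrib_right)
    also have "\<dots> = (if ty = hi then 1 else 0)"
      using box_sum[OF hiT lh h1] by (simp add: B_def power_mult_distrib[symmetric])
    also have "\<dots> = (if y = u then 1 else 0)"
    proof -
      have "ty = hi \<longleftrightarrow> ty = tu"
      proof
        assume "ty = hi"
        hence "\<And>k. ty k = min (Suc (ty k)) (tu k)" by (metis hi_def)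
        have "ty k = tu k" for k using \<open>\<And>k. ty k = min (Suc (ty k)) (tu k)\<close>[of k] by (simp add: min_def split: if_splits)
        hence "\<And>k. ty k = tu k" by blast
        thus "ty = tu" by auto
      next
        assume "ty = tu" thus "ty = hi" by (auto simp: hi_def fun_eq_iff)
      qed
      also have "\<dots> \<longleftrightarrow> y = u" using iota_inj[OF y u] by (auto simp: ty_def tu_def)
      finally show ?thesis by simp
    qed
    finally show ?thesis .
  qed
  finally show ?thesis .
qed

lemma mobius_sum:
  assumes u: "u \<in> Sn n"
  shows "(\<Sum>z\<in>{z \<in> Sn n. iota z \<le> iota u}. (\<Sum>y\<in>Sp n z c. (-1::complex) ^ (iota_size n z - iota_size n y)))
     = (if \<forall>k\<in>{1..n}. c k \<le> kappa u k then 1 else 0)"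
proof -
  have finS: "finite (Sn n)" using Sn_finite_card by simp
  define Zu where "Zu = {z \<in> Sn n. iota z \<le> iota u}"
  have finZ: "finite Zu" using finS by (simp add: Zu_def)
  have SpS: "Sp n z c = {y \<in> Sn n. y \<in> Sp n z c}" if "z \<in> Sn n" for z
    using Cvee_iff[OF that] by (auto simp: Sp_def)
  have "(\<Sum>z\<in>Zu. (\<Sum>y\<in>Sp n z c. (-1::complex) ^ (iota_size n z - iota_size n y)))
      = (\<Sum>z\<in>Zu. (\<Sum>y\<in>Sn n. if y \<in> Sp n z c then (-1::complex) ^ (iota_size n z - iota_size n y) else 0))"
  proof (rule sum.cong[OF refl])
    fix z assume "z \<in> Zu"
    hence "z \<in> Sn n" by (simp add: Zu_def)
    hence e: "Sn n \<inter> Sp n z c = Sp n z c" using SpS by blast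
    show "(\<Sum>y\<in>Sp n z c. (-1::complex) ^ (iota_size n z - iota_size n y)) =
      (\<Sum>y\<in>Sn n. if y \<in> Sp n z c then (-1::complex) ^ (iota_size n z - iota_size n y) else 0)"
      using sum.inter_restrict[OF finS, of "\<lambda>y. (-1::complex) ^ (iota_size n z - iota_size n y)" "Sp n z c"] e
      by simp
  qed
  also have "\<dots> = (\<Sum>y\<in>Sn n. \<Sum>z\<in>Zu. if y \<in> Sp n z c then (-1::complex) ^ (iota_size n z - iota_size n y) else 0)"
    by (rule sum.swap)
  also have "\<dots> = (\<Sum>y\<in>Sn n. if \<forall>k\<in>{1..n}. c k \<le> kappa y k then (if y = u then 1 else 0) else 0)"
  proof (intro sum.cong refl)
    fix y assume y: "y \<in> Sn n"
    show "(\<Sum>z\<in>Zu. if y \<in> Sp n z c then (-1::complex) ^ (iota_size n z - iota_size n y) else 0)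
      = (if \<forall>k\<in>{1..n}. c k \<le> kappa y k then (if y = u then 1 else 0) else 0)"
    proof (cases "\<forall>k\<in>{1..n}. c k \<le> kappa y k")
      case True
      have "(\<Sum>z\<in>Zu. if y \<in> Sp n z c then (-1::complex) ^ (iota_size n z - iota_size n y) else 0)
          = (\<Sum>z\<in>Zu. if y \<in> Cvee n z then (-1::complex) ^ (iota_size n z - iota_size n y) else 0)"
        using True by (intro sum.cong refl) (simp add: Sp_def)
      also have "\<dots> = (if y = u then 1 else 0)" using inner_sum[OF y u] by (simp add: Zu_def)
      finally show ?thesis using True by simp
    next
      case False
      hence "\<And>z. y \<notin> Sp n z c" by (simp add: Sp_def)
      hence "(\<Sum>z\<in>Zu. if y \<in> Sp n z c then (-1::complex) ^ (iota_size n z - iota_size n y) else 0) = 0" by simp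
      thus ?thesis using False by presburger
    qed
  qed
  also have "\<dots> = (\<Sum>y\<in>Sn n. if y = u then (if \<forall>k\<in>{1..n}. c k \<le> kappa u k then 1 else 0) else (0::complex))"
    by (intro sum.cong refl) auto
  also have "\<dots> = (if \<forall>k\<in>{1..n}. c k \<le> kappa u k then 1 else 0)"
    using sum.delta[OF finS, of u "\<lambda>_. if \<forall>k\<in>{1..n}. c k \<le> kappa u k then 1 else (0::complex)"] u by simp
  finally show ?thesis by (simp add: Zu_def)
qed


definition spc :: "'a::field set \<Rightarrow> bool" where
  "spc M \<longleftrightarrow> 0 \<in> M \<and> (\<forall>a\<in>M. \<forall>b\<in>M. a + b \<in> M) \<and> (\<forall>a\<in>M. \<forall>k::int. of_int k * a \<in> M)"

lemma of_int_inverse_ex: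
  assumes "of_int k \<noteq> (0::'a::{finite,field})"
  shows "\<exists>k'. of_int k' * of_int k = (1::'a)"
proof -
  define p where "p = CHAR('a)"
  have pp: "prime p" unfolding p_def
    using prime_CHAR_semidom finite_imp_CHAR_pos[OF finite_UNIV] by blast
  have pi: "prime (int p)" using pp by (simp add: prime_int_nat_transfer)
  have nd: "\<not> int p dvd k" using assms by (simp add: of_int_eq_0_iff_char_dvd p_def)
  have cop: "coprime (int p) k" by (rule prime_imp_coprime[OF pi nd])
  obtain u v where uv: "u * k + v * int p = gcd k (int p)" using bezout_int by blast
  have "gcd k (int p) = 1" using cop by (simp add: coprime_iff_gcd_eq_1 gcd.commute)
  hence "of_int (u * k + v * int p) = (1::'a)" using uv by simp
  moreover have "of_int (int p) = (0::'a)" by (simp add: p_def)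
  ultimately have "of_int u * of_int k = (1::'a)" by simp
  thus ?thesis by blast
qed

lemma max_spc:
  fixes e :: "'a::{finite,field}"
  assumes "e \<noteq> 0"
  obtains M where "spc M" "e \<notin> M" "\<And>M'. spc M' \<Longrightarrow> M \<subseteq> M' \<Longrightarrow> e \<notin> M' \<Longrightarrow> M' = M"
proof -
  define P where "P = (\<lambda>k. \<exists>M::'a set. spc M \<and> e \<notin> M \<and> card M = k)"
  have s0: "spc {0::'a}" by (simp add: spc_def)
  have P1: "P (card {0::'a})" unfolding P_def using s0 assms by blast
  have bd: "\<forall>y. P y \<longrightarrow> y \<le> card (UNIV::'a set)"
  proof (intro allI impI)
    fix y assume "P y"
    then obtain M :: "'a set" where "card M = y" unfolding P_def by blast
    moreover have "card M \<le> card (UNIV::'a set)" by (rule card_mono) simp_all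
    ultimately show "y \<le> card (UNIV::'a set)" by simp
  qed
  obtain k where k: "P k" "\<And>y. P y \<Longrightarrow> y \<le> k"
    using Nat.ex_has_greatest_nat[of P "card {0::'a}" "card (UNIV::'a set)", OF P1 bd] by blast
  then obtain M where M: "spc M" "e \<notin> M" "card M = k" unfolding P_def by blast
  show ?thesis
  proof (rule that[OF M(1,2)])
    fix M' assume M': "spc M'" "M \<subseteq> M'" "e \<notin> M'"
    have "P (card M')" unfolding P_def using M' by blast
    hence c1: "card M' \<le> card M" using k(2) M(3) by simp
    have c2: "card M \<le> card M'" by (rule card_mono) (simp_all add: M'(2))
    have "M = M'" by (rule card_subset_eq) (use c1 c2 M'(2) in simp_all)
    thus "M' = M" by simp
  qed
qed

lemma cis_ne1: assumes p2: "(p::nat) \<ge> 2" shows "cis (2 * pi / real p) \<noteq> 1"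
  proof
    assume "cis (2 * pi / real p) = 1"
    hence "Re (cis (2 * pi / real p)) = 1" by simp
    hence "cos (2 * pi / real p) = 1" by simp
    then obtain j :: int where j: "2 * pi / real p = of_int j * 2 * pi" using cos_one_2pi_int by blast
    have pp: "real p > 0" using p2 by simp
    have "2 * pi = (of_int j * 2 * pi) * real p" using j pp by (simp add: divide_eq_eq)
    hence "(2 * pi) * 1 = (2 * pi) * (of_int j * real p)" by (simp add: ac_simps)
    hence "1 = of_int j * real p" using mult_left_cancel[of "2 * pi" 1 "of_int j * real p"] by simp
    hence "1 = j * int p" by (metis of_int_1 of_int_eq_iff of_int_mult of_int_of_nat_eq)
    hence "int p dvd 1" by (metis dvd_triv_right)
    thus False using p2 by simp
  qed

lemma add_char_ex:
  fixes e :: "'a::{finite,field}"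
  assumes "e \<noteq> 0"
  shows "\<exists>\<theta>::'a \<Rightarrow> complex. \<theta> 0 = 1 \<and> (\<forall>a b. \<theta> (a + b) = \<theta> a * \<theta> b) \<and> \<theta> e \<noteq> 1"
proof -
  define p where "p = CHAR('a)"
  have pp: "prime p" unfolding p_def
    using prime_CHAR_semidom finite_imp_CHAR_pos[OF finite_UNIV] by blast
  have p2: "p \<ge> 2" using pp prime_ge_2_nat by blast
  obtain M where M: "spc M" "e \<notin> M" and Mmax: "\<And>M'. spc M' \<Longrightarrow> M \<subseteq> M' \<Longrightarrow> e \<notin> M' \<Longrightarrow> M' = M"
    using max_spc[OF assms] by blast
  have M0: "0 \<in> M" and Madd: "\<And>a b. a \<in> M \<Longrightarrow> b \<in> M \<Longrightarrow> a + b \<in> M"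
    and Msc: "\<And>a k. a \<in> M \<Longrightarrow> of_int k * a \<in> M" using M(1) by (auto simp: spc_def)
  have Mneg: "\<And>a. a \<in> M \<Longrightarrow> - a \<in> M" using Msc[of _ "-1"] by simp
  have dec: "\<exists>m\<in>M. \<exists>k::int. t = m + of_int k * e" for t
  proof (cases "t \<in> M")
    case True thus ?thesis by (intro bexI[of _ t] exI[of _ 0]) auto
  next
    case False
    define Mt where "Mt = {m + of_int k * t | m k. m \<in> M}"
    have "spc Mt" unfolding spc_def
    proof (intro conjI ballI allI)
      show "0 \<in> Mt" unfolding Mt_def using M0 by (intro CollectI exI[of _ 0]) auto
    next
      fix a b assume "a \<in> Mt" "b \<in> Mt"
      then obtain m1 k1 m2 k2 where "a = m1 + of_int k1 * t" "m1 \<in> M" "b = m2 + of_int k2 * t" "m2 \<in> M"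
        unfolding Mt_def by blast
      thus "a + b \<in> Mt" unfolding Mt_def using Madd
        by (intro CollectI exI[of _ "m1 + m2"] exI[of _ "k1 + k2"]) (auto simp: algebra_simps)
    next
      fix a and j :: int assume "a \<in> Mt"
      then obtain m1 k1 where "a = m1 + of_int k1 * t" "m1 \<in> M" unfolding Mt_def by blast
      thus "of_int j * a \<in> Mt" unfolding Mt_def using Msc
        by (intro CollectI exI[of _ "of_int j * m1"] exI[of _ "j * k1"]) (auto simp: algebra_simps)
    qed
    moreover have "M \<subseteq> Mt"
    proof
      fix x assume "x \<in> M" thus "x \<in> Mt" unfolding Mt_def by (intro CollectI exI[of _ x] exI[of _ 0]) simp
    qed
    moreover have "t \<in> Mt" unfolding Mt_def using M0 by (intro CollectI exI[of _ 0] exI[of _ 1]) auto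
    ultimately have "e \<in> Mt" using Mmax False by blast
    then obtain m k where mk: "e = m + of_int k * t" "m \<in> M" unfolding Mt_def by blast
    have "of_int k \<noteq> (0::'a)" using mk M(2) by auto
    then obtain k' where k': "of_int k' * of_int k = (1::'a)" using of_int_inverse_ex by blast
    have "t = of_int k' * (e - m)" using mk k' by (simp add: algebra_simps)
    hence "t = of_int (- k') * m + of_int k' * e" by (simp add: algebra_simps)
    thus ?thesis using Msc[OF mk(2)] by blast
  qed
  have uniq: "int p dvd k1 - k2" if "m1 \<in> M" "m2 \<in> M" "m1 + of_int k1 * e = m2 + of_int k2 * e" for m1 m2 k1 k2
  proof (rule ccontr)
    assume nd: "\<not> int p dvd k1 - k2"
    have "of_int (k1 - k2) = (0::'a) \<longleftrightarrow> int p dvd k1 - k2" by (simp only: p_def of_int_eq_0_iff_char_dvd)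
    hence nz: "of_int (k1 - k2) \<noteq> (0::'a)" using nd by blast
    have "of_int (k1 - k2) * e = m2 + - m1" using that(3) by (simp add: algebra_simps)
    hence inM: "of_int (k1 - k2) * e \<in> M" using Madd[OF that(2) Mneg[OF that(1)]] by simp
    obtain j where j: "of_int j * of_int (k1 - k2) = (1::'a)" using of_int_inverse_ex[OF nz] by blast
    have e_eq: "e = of_int j * (of_int (k1 - k2) * e)" using j by (simp only: mult.assoc[symmetric]) simp
    have "of_int j * (of_int (k1 - k2) * e) \<in> M" by (rule Msc[OF inM])
    hence "e \<in> M" using e_eq[symmetric] by (rule back_subst)
    thus False using M(2) by simp
  qed
  define kk where "kk = (\<lambda>t. SOME k::int. \<exists>m\<in>M. t = m + of_int k * e)"
  have kk: "\<exists>m\<in>M. t = m + of_int (kk t) * e" for t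
  proof -
    have "\<exists>k::int. \<exists>m\<in>M. t = m + of_int k * e" using dec[of t] by blast
    thus ?thesis unfolding kk_def by (rule someI_ex)
  qed
  define \<theta> where "\<theta> = (\<lambda>t. cis (2 * pi * of_int (kk t) / real p))"
  have cis_eq: "cis (2 * pi * of_int k1 / real p) = cis (2 * pi * of_int k2 / real p)"
    if dv: "int p dvd k1 - k2" for k1 k2
  proof -
    obtain j where j: "k1 - k2 = int p * j" using dv by (elim dvdE)
    have "2 * pi * of_int k1 / real p = 2 * pi * of_int k2 / real p + 2 * pi * of_int j"
      using j p2 by (simp add: field_simps)
    hence "cis (2 * pi * of_int k1 / real p) = cis (2 * pi * of_int k2 / real p) * cis (2 * pi * of_int j)"
      by (simp only: cis_mult)
    moreover have "cis (2 * pi * of_int j) = 1" by (rule cis_multiple_2pi) simp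
    ultimately show ?thesis by simp
  qed
  have th: "\<theta> t = cis (2 * pi * of_int k / real p)" if "m \<in> M" "t = m + of_int k * e" for t m k
  proof -
    obtain m' where m': "m' \<in> M" "t = m' + of_int (kk t) * e" using kk[of t] by blast
    have "int p dvd kk t - k" using uniq[OF m'(1) that(1)] m'(2) that(2) by simp
    thus ?thesis unfolding \<theta>_def by (rule cis_eq)
  qed
  have add: "\<theta> (a + b) = \<theta> a * \<theta> b" for a b
  proof -
    obtain m1 k1 where m1: "m1 \<in> M" "a = m1 + of_int k1 * e" using dec by blast
    obtain m2 k2 where m2: "m2 \<in> M" "b = m2 + of_int k2 * e" using dec by blast
    have "a + b = (m1 + m2) + of_int (k1 + k2) * e" using m1 m2 by (simp add: algebra_simps)
    hence "\<theta> (a + b) = cis (2 * pi * of_int (k1 + k2) / real p)" using th Madd[OF m1(1) m2(1)] by blast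
    also have "\<dots> = cis (2 * pi * of_int k1 / real p) * cis (2 * pi * of_int k2 / real p)"
      by (simp add: cis_mult add_divide_distrib distrib_left)
    finally show ?thesis using th[OF m1] th[OF m2] by simp
  qed
  have t0: "\<theta> 0 = 1" using th[OF M0, of 0 0] by simp
  have te: "\<theta> e = cis (2 * pi / real p)" using th[OF M0, of e 1] by simp
  have "cis (2 * pi / real p) \<noteq> 1" by (rule cis_ne1[OF p2])
  hence "\<theta> e \<noteq> 1" using te by simp
  moreover have A: "\<forall>a b. \<theta> (a + b) = \<theta> a * \<theta> b" by (intro allI) (rule add)
  ultimately show ?thesis using t0 by (intro exI[of _ \<theta>] conjI)
qed


lemma ut_zero: "(0::nat \<Rightarrow> nat \<Rightarrow> 'a::{finite,field}) \<in> ut n" by (simp add: ut_def)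
lemma ut_add: "x \<in> ut n \<Longrightarrow> y \<in> ut n \<Longrightarrow> x + y \<in> ut n"
  unfolding ut_def by auto (metis add.right_neutral)+
lemma ut_uminus: "x \<in> ut n \<Longrightarrow> - x \<in> ut n"
  unfolding ut_def by auto
lemma ut_diff: "x \<in> ut n \<Longrightarrow> y \<in> ut n \<Longrightarrow> x - y \<in> ut n"
  using ut_add[of x n "- y"] ut_uminus[of y n] by simp

lemma utw_sub: "utw n w \<subseteq> ut n" by (auto simp: utw_def)
lemma utw_zero: "(0::nat \<Rightarrow> nat \<Rightarrow> 'a::{finite,field}) \<in> utw n w" by (simp add: utw_def ut_zero)
lemma utw_uminus: "x \<in> utw n w \<Longrightarrow> - x \<in> utw n w"
  unfolding utw_def using ut_uminus by auto

lemma finite_ut: "finite (ut n :: (nat \<Rightarrow> nat \<Rightarrow> 'a::{finite,field}) set)"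
proof -
  define B where "B = {1..n} \<times> {1..n}"
  define f where "f = (\<lambda>x::nat \<Rightarrow> nat \<Rightarrow> 'a. restrict (\<lambda>(i, j). x i j) B)"
  have inj: "inj_on f (ut n)"
  proof (rule inj_onI)
    fix x y assume x: "x \<in> ut n" and y: "y \<in> ut n" and e: "f x = f y"
    show "x = y"
    proof (intro ext)
      fix i j
      show "x i j = y i j"
      proof (cases "(i, j) \<in> B")
        case True thus ?thesis using fun_cong[OF e, of "(i, j)"] by (simp add: f_def)
      next
        case False
        hence "x i j = 0" "y i j = 0" using x y unfolding ut_def B_def by (auto, fastforce+)
        thus ?thesis by simp
      qed
    qed
  qed
  have "f ` ut n \<subseteq> PiE B (\<lambda>_. UNIV)" unfolding f_def by (auto simp: restrict_PiE_iff)
  moreover have "finite (PiE B (\<lambda>_. (UNIV :: 'a set)))" by (rule finite_PiE) (simp_all add: B_def)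
  ultimately have "finite (f ` ut n)" by (rule finite_subset)
  thus ?thesis using finite_imageD[OF _ inj] by blast
qed

lemma irrD:
  assumes "\<psi> \<in> irr n"
  shows "\<psi> 0 = 1" "\<And>x y. x \<in> ut n \<Longrightarrow> y \<in> ut n \<Longrightarrow> \<psi> (x + y) = \<psi> x * \<psi> y"
    "\<And>x. x \<notin> ut n \<Longrightarrow> \<psi> x = 0"
  using assms by (auto simp: irr_def)

lemma irr_neg:
  assumes "\<psi> \<in> irr n" "x \<in> ut n"
  shows "\<psi> (- x) * \<psi> x = 1"
  using irrD(2)[OF assms(1) ut_uminus[OF assms(2)] assms(2)] irrD(1)[OF assms(1)] by simp

lemma irr_pow:
  fixes \<psi> :: "(nat \<Rightarrow> nat \<Rightarrow> 'a::{finite,field}) \<Rightarrow> complex"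
  assumes "\<psi> \<in> irr n" "x \<in> ut n"
  shows "\<psi> x ^ CHAR('a) = 1"
proof -
  define sc where "sc = (\<lambda>k::nat. (\<lambda>i j. of_nat k * x i j) :: nat \<Rightarrow> nat \<Rightarrow> 'a)"
  have scu: "sc k \<in> ut n" for k using assms(2) unfolding ut_def sc_def by auto
  have "\<psi> (sc k) = \<psi> x ^ k" for k
  proof (induction k)
    case 0
    have "sc 0 = 0" by (simp add: sc_def fun_eq_iff)
    show ?case by (simp only: power_0 \<open>sc 0 = 0\<close> irrD(1)[OF assms(1)])
  next
    case (Suc k)
    have e: "sc (Suc k) = x + sc k" by (simp add: sc_def fun_eq_iff algebra_simps)
    have "\<psi> (sc (Suc k)) = \<psi> (x + sc k)" by (simp only: e)
    also have "\<dots> = \<psi> x * \<psi> (sc k)" by (rule irrD(2)[OF assms(1) assms(2) scu[of k]])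
    also have "\<dots> = \<psi> x ^ Suc k" by (simp only: Suc.IH power_Suc)
    finally show ?case .
  qed
  moreover have "sc CHAR('a) = 0" by (simp add: sc_def fun_eq_iff)
  ultimately show ?thesis using irrD(1)[OF assms(1)] by metis
qed

lemma finite_irr: "finite (irr n :: ((nat \<Rightarrow> nat \<Rightarrow> 'a::{finite,field}) \<Rightarrow> complex) set)"
proof -
  define p where "p = CHAR('a)"
  have "0 < p" unfolding p_def by (rule finite_imp_CHAR_pos) simp
  hence pp: "p \<ge> 1" by simp
  define R where "R = {z::complex. z ^ p = 1}"
  have fR: "finite R" unfolding R_def by (rule finite_roots_unity[OF pp])
  define f where "f = (\<lambda>\<psi>::(nat \<Rightarrow> nat \<Rightarrow> 'a) \<Rightarrow> complex. restrict \<psi> (ut n))"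
  have inj: "inj_on f (irr n)"
  proof (rule inj_onI)
    fix \<psi> \<phi> assume a: "\<psi> \<in> irr n" "\<phi> \<in> irr n" "f \<psi> = f \<phi>"
    show "\<psi> = \<phi>"
    proof
      fix x show "\<psi> x = \<phi> x"
      proof (cases "x \<in> ut n")
        case True thus ?thesis using fun_cong[OF a(3), of x] by (simp add: f_def)
      next
        case False thus ?thesis using irrD(3)[OF a(1)] irrD(3)[OF a(2)] by simp
      qed
    qed
  qed
  have "f ` irr n \<subseteq> PiE (ut n) (\<lambda>_. R)"
    using irr_pow unfolding f_def R_def p_def by auto
  moreover have "finite (PiE (ut n :: (nat \<Rightarrow> nat \<Rightarrow> 'a) set) (\<lambda>_. R))" by (rule finite_PiE) (simp_all add: finite_ut fR)
  ultimately have "finite (f ` irr n)" by (rule finite_subset)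
  thus ?thesis using finite_imageD[OF _ inj] by blast
qed

lemma irr_sum_zero:
  assumes "\<psi> \<in> irr n" "y \<in> ut n" "\<psi> y \<noteq> 1"
  shows "(\<Sum>x\<in>ut n. \<psi> x) = 0"
proof -
  have b: "bij_betw (\<lambda>x. x + y) (ut n) (ut n)"
    by (rule bij_betw_byWitness[where f' = "\<lambda>x. x - y"]) (auto intro: ut_add ut_diff assms(2))
  have "(\<Sum>x\<in>ut n. \<psi> x) = (\<Sum>x\<in>ut n. \<psi> (x + y))" using sum.reindex_bij_betw[OF b, of \<psi>] by simp
  also have "\<dots> = (\<Sum>x\<in>ut n. \<psi> x * \<psi> y)" using irrD(2)[OF assms(1) _ assms(2)] by simp
  also have "\<dots> = \<psi> y * (\<Sum>x\<in>ut n. \<psi> x)" by (simp add: sum_distrib_left mult.commute)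
  finally have "(1 - \<psi> y) * (\<Sum>x\<in>ut n. \<psi> x) = 0" by (simp add: algebra_simps)
  thus ?thesis using assms(3) by simp
qed

lemma separation:
  fixes x :: "nat \<Rightarrow> nat \<Rightarrow> 'a::{finite,field}"
  assumes "x \<in> ut n" "x \<notin> utw n w"
  shows "\<exists>\<psi>\<in>irr n. utw n w \<subseteq> ker_char n \<psi> \<and> \<psi> x \<noteq> 1"
proof -
  obtain i j where ij: "x i j \<noteq> 0" "\<not> (0 < j - i \<and> j - i \<le> iota w i)" using assms unfolding utw_def by auto
  obtain \<theta> :: "'a \<Rightarrow> complex" where th: "\<theta> 0 = 1" "\<And>a b. \<theta> (a + b) = \<theta> a * \<theta> b" "\<theta> (x i j) \<noteq> 1"
    using add_char_ex[OF ij(1)] by blast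
  define \<psi> where "\<psi> = (\<lambda>y::nat \<Rightarrow> nat \<Rightarrow> 'a. if y \<in> ut n then \<theta> (y i j) else 0)"
  have irr: "\<psi> \<in> irr n" unfolding irr_def
  proof (intro CollectI conjI allI impI)
    show "\<psi> 0 = 1" using th(1) ut_zero by (simp add: \<psi>_def)
  next
    fix a b :: "nat \<Rightarrow> nat \<Rightarrow> 'a" assume "a \<in> ut n" "b \<in> ut n"
    hence ab: "a + b \<in> ut n" by (rule ut_add)
    have "\<psi> (a + b) = \<theta> ((a + b) i j)" using ab by (simp only: \<psi>_def if_True)
    also have "\<dots> = \<theta> (a i j + b i j)" by simp
    also have "\<dots> = \<theta> (a i j) * \<theta> (b i j)" by (rule th(2))
    also have "\<dots> = \<psi> a * \<psi> b" using \<open>a \<in> ut n\<close> \<open>b \<in> ut n\<close> by (simp add: \<psi>_def)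
    finally show "\<psi> (a + b) = \<psi> a * \<psi> b" .
  next
    fix a :: "nat \<Rightarrow> nat \<Rightarrow> 'a" assume "a \<notin> ut n" thus "\<psi> a = 0" by (simp add: \<psi>_def)
  qed
  have "utw n w \<subseteq> ker_char n \<psi>"
  proof
    fix y :: "nat \<Rightarrow> nat \<Rightarrow> 'a" assume y: "y \<in> utw n w"
    hence "y i j = 0" using ij(2) unfolding utw_def by auto
    thus "y \<in> ker_char n \<psi>" using y utw_sub th(1) ut_zero unfolding ker_char_def \<psi>_def by auto
  qed
  moreover have "\<psi> x \<noteq> 1" using assms(1) th(3) by (simp add: \<psi>_def)
  ultimately show ?thesis using irr by blast
qed


lemma char_sum:
  fixes x :: "nat \<Rightarrow> nat \<Rightarrow> 'a::{finite,field}"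
  shows "(\<Sum>\<psi>\<in>{\<psi>\<in>irr n. utw n w \<subseteq> ker_char n \<psi>}. \<psi> 0 * \<psi> x) = chibar n w x"
proof -
  define H where "H = (utw n w :: (nat \<Rightarrow> nat \<Rightarrow> 'a) set)"
  define D where "D = {\<psi>\<in>irr n. H \<subseteq> ker_char n \<psi>}"
  define U where "U = (ut n :: (nat \<Rightarrow> nat \<Rightarrow> 'a) set)"
  have finU: "finite U" unfolding U_def by (rule finite_ut)
  have HU: "H \<subseteq> U" unfolding H_def U_def by (rule utw_sub)
  have finH: "finite H" using finite_subset[OF HU finU] .
  have H0: "0 \<in> H" unfolding H_def by (rule utw_zero)
  have cH: "card H \<noteq> 0" using finH H0 by auto
  have finD: "finite D" unfolding D_def using finite_irr by (rule finite_subset[rotated]) auto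
  have Dirr: "\<And>\<psi>. \<psi> \<in> D \<Longrightarrow> \<psi> \<in> irr n" by (simp add: D_def)
  have kerD: "\<psi> y = 1" if "\<psi> \<in> D" "y \<in> H" for \<psi> y
    using that irrD(1)[OF Dirr[OF that(1)]] unfolding D_def ker_char_def by auto
  define \<psi>1 where "\<psi>1 = (\<lambda>y::nat \<Rightarrow> nat \<Rightarrow> 'a. if y \<in> U then (1::complex) else 0)"
  have \<psi>1D: "\<psi>1 \<in> D"
  proof -
    have "\<psi>1 \<in> irr n" unfolding irr_def
    proof (intro CollectI conjI allI impI)
      show "\<psi>1 0 = 1" using ut_zero by (simp add: \<psi>1_def U_def)
    next
      fix a b :: "nat \<Rightarrow> nat \<Rightarrow> 'a" assume "a \<in> ut n" "b \<in> ut n"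
      thus "\<psi>1 (a + b) = \<psi>1 a * \<psi>1 b" using ut_add[of a n b] by (simp add: \<psi>1_def U_def)
    next
      fix a :: "nat \<Rightarrow> nat \<Rightarrow> 'a" assume "a \<notin> ut n" thus "\<psi>1 a = 0" by (simp add: \<psi>1_def U_def)
    qed
    moreover have "H \<subseteq> ker_char n \<psi>1" using HU ut_zero by (auto simp: ker_char_def \<psi>1_def U_def)
    ultimately show ?thesis by (simp add: D_def)
  qed
  have sumH: "(\<Sum>\<psi>\<in>D. \<psi> y) = of_nat (card D)" if yH: "y \<in> H" for y
  proof -
    have "(\<Sum>\<psi>\<in>D. \<psi> y) = (\<Sum>\<psi>\<in>D. (1::complex))" by (rule sum.cong[OF refl]) (rule kerD[OF _ yH])
    thus ?thesis by simp
  qed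
  have sumN: "(\<Sum>\<psi>\<in>D. \<psi> y) = 0" if y: "y \<in> U" "y \<notin> H" for y
  proof -
    obtain \<psi>0 where \<psi>0: "\<psi>0 \<in> irr n" "H \<subseteq> ker_char n \<psi>0" "\<psi>0 y \<noteq> 1"
      using separation[of y n w] y unfolding H_def U_def by blast
    have \<psi>0D: "\<psi>0 \<in> D" using \<psi>0 by (simp add: D_def)
    define g where "g = (\<lambda>\<psi>. (\<lambda>z::nat \<Rightarrow> nat \<Rightarrow> 'a. \<psi>0 z * \<psi> z))"
    define h where "h = (\<lambda>\<psi>. (\<lambda>z::nat \<Rightarrow> nat \<Rightarrow> 'a. \<psi>0 (- z) * \<psi> z))"
    have gD: "g \<psi> \<in> D" if "\<psi> \<in> D" for \<psi>
    proof -
      note I = irrD[OF Dirr[OF that]] and I0 = irrD[OF \<psi>0(1)]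
      have "g \<psi> \<in> irr n" unfolding irr_def
      proof (intro CollectI conjI allI impI)
        show "g \<psi> 0 = 1" using I(1) I0(1) by (simp add: g_def)
      next
        fix a b :: "nat \<Rightarrow> nat \<Rightarrow> 'a" assume "a \<in> ut n" "b \<in> ut n"
        thus "g \<psi> (a + b) = g \<psi> a * g \<psi> b" using I(2) I0(2) by (simp add: g_def mult_ac)
      next
        fix a :: "nat \<Rightarrow> nat \<Rightarrow> 'a" assume "a \<notin> ut n" thus "g \<psi> a = 0" using I(3) by (simp add: g_def)
      qed
      moreover have "H \<subseteq> ker_char n (g \<psi>)"
      proof
        fix z assume z: "z \<in> H"
        hence "z \<in> ut n" using HU by (auto simp: U_def)
        thus "z \<in> ker_char n (g \<psi>)" using kerD[OF that z] kerD[OF \<psi>0D z] I(1) I0(1)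
          by (simp add: ker_char_def g_def)
      qed
      ultimately show ?thesis by (simp add: D_def)
    qed
    have hD: "h \<psi> \<in> D" if "\<psi> \<in> D" for \<psi>
    proof -
      note I = irrD[OF Dirr[OF that]] and I0 = irrD[OF \<psi>0(1)]
      have "h \<psi> \<in> irr n" unfolding irr_def
      proof (intro CollectI conjI allI impI)
        show "h \<psi> 0 = 1" using I(1) I0(1) by (simp add: h_def)
      next
        fix a b :: "nat \<Rightarrow> nat \<Rightarrow> 'a" assume ab: "a \<in> ut n" "b \<in> ut n"
        have "- (a + b) = - a + - b" by (simp add: algebra_simps)
        hence "\<psi>0 (- (a + b)) = \<psi>0 (- a) * \<psi>0 (- b)" using I0(2)[OF ut_uminus[OF ab(1)] ut_uminus[OF ab(2)]] by simp
        thus "h \<psi> (a + b) = h \<psi> a * h \<psi> b" using I(2)[OF ab] by (simp add: h_def mult_ac)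
      next
        fix a :: "nat \<Rightarrow> nat \<Rightarrow> 'a" assume "a \<notin> ut n" thus "h \<psi> a = 0" using I(3) by (simp add: h_def)
      qed
      moreover have "H \<subseteq> ker_char n (h \<psi>)"
      proof
        fix z assume z: "z \<in> H"
        have mz: "- z \<in> H" using z unfolding H_def by (rule utw_uminus)
        hence "z \<in> ut n" using HU z by (auto simp: U_def)
        thus "z \<in> ker_char n (h \<psi>)" using kerD[OF that z] kerD[OF \<psi>0D mz] I(1) I0(1)
          by (simp add: ker_char_def h_def)
      qed
      ultimately show ?thesis by (simp add: D_def)
    qed
    have hg: "h (g \<psi>) = \<psi>" if "\<psi> \<in> D" for \<psi>
    proof
      fix z
      show "h (g \<psi>) z = \<psi> z"
      proof (cases "z \<in> ut n")
        case True
        have "h (g \<psi>) z = (\<psi>0 (- z) * \<psi>0 z) * \<psi> z" by (simp add: g_def h_def mult_ac)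
        thus ?thesis using irr_neg[OF \<psi>0(1) True] by simp
      next
        case False thus ?thesis using irrD(3)[OF Dirr[OF that] False] by (simp add: g_def h_def)
      qed
    qed
    have gh: "g (h \<psi>) = \<psi>" if "\<psi> \<in> D" for \<psi>
    proof
      fix z
      show "g (h \<psi>) z = \<psi> z"
      proof (cases "z \<in> ut n")
        case True
        have "g (h \<psi>) z = (\<psi>0 (- z) * \<psi>0 z) * \<psi> z" by (simp add: g_def h_def mult_ac)
        thus ?thesis using irr_neg[OF \<psi>0(1) True] by simp
      next
        case False thus ?thesis using irrD(3)[OF Dirr[OF that] False] by (simp add: g_def h_def)
      qed
    qed
    have b: "bij_betw g D D" by (rule bij_betw_byWitness[where f' = h]) (use gD hD hg gh in auto)
    have "(\<Sum>\<psi>\<in>D. \<psi> y) = (\<Sum>\<psi>\<in>D. g \<psi> y)" using sum.reindex_bij_betw[OF b, of "\<lambda>\<psi>. \<psi> y"] by simp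
    also have "\<dots> = \<psi>0 y * (\<Sum>\<psi>\<in>D. \<psi> y)" by (simp add: g_def sum_distrib_left)
    finally have "(1 - \<psi>0 y) * (\<Sum>\<psi>\<in>D. \<psi> y) = 0" by (simp add: algebra_simps)
    thus ?thesis using \<psi>0(3) by simp
  qed
  have cardD: "of_nat (card D) * of_nat (card H) = (of_nat (card U) :: complex)"
  proof -
    have "(\<Sum>y\<in>U. \<Sum>\<psi>\<in>D. \<psi> y) = (\<Sum>y\<in>U. if y \<in> H then of_nat (card D) else (0::complex))"
      using sumH sumN by (intro sum.cong refl) auto
    also have "\<dots> = (\<Sum>y\<in>U \<inter> H. of_nat (card D))" by (rule sum.inter_restrict[OF finU, symmetric])
    also have "\<dots> = of_nat (card D) * of_nat (card H)" using HU by (simp add: Int_absorb1)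
    finally have 1: "(\<Sum>y\<in>U. \<Sum>\<psi>\<in>D. \<psi> y) = of_nat (card D) * of_nat (card H)" .
    have "(\<Sum>y\<in>U. \<Sum>\<psi>\<in>D. \<psi> y) = (\<Sum>\<psi>\<in>D. \<Sum>y\<in>U. \<psi> y)" by (rule sum.swap)
    also have "\<dots> = (\<Sum>\<psi>\<in>D. if \<psi> = \<psi>1 then of_nat (card U) else 0)"
    proof (rule sum.cong[OF refl])
      fix \<psi> assume \<psi>: "\<psi> \<in> D"
      show "(\<Sum>y\<in>U. \<psi> y) = (if \<psi> = \<psi>1 then of_nat (card U) else 0)"
      proof (cases "\<psi> = \<psi>1")
        case True thus ?thesis by (simp add: \<psi>1_def)
      next
        case False
        have "\<exists>y\<in>U. \<psi> y \<noteq> 1"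
        proof (rule ccontr)
          assume "\<not> (\<exists>y\<in>U. \<psi> y \<noteq> 1)"
          hence "\<psi> z = \<psi>1 z" for z using irrD(3)[OF Dirr[OF \<psi>]] by (cases "z \<in> U") (auto simp: \<psi>1_def U_def)
          thus False using False by auto
        qed
        then obtain y where "y \<in> U" "\<psi> y \<noteq> 1" by blast
        thus ?thesis using irr_sum_zero[OF Dirr[OF \<psi>]] False by (simp add: U_def)
      qed
    qed
    also have "\<dots> = of_nat (card U)" using sum.delta[OF finD, of \<psi>1] \<psi>1D by simp
    finally show ?thesis using 1 by simp
  qed
  show ?thesis
  proof (cases "x \<in> U")
    case False
    have z: "\<And>\<psi>. \<psi> \<in> D \<Longrightarrow> \<psi> x = 0" using irrD(3)[OF Dirr] False by (simp add: U_def)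
    have "(\<Sum>\<psi>\<in>D. \<psi> 0 * \<psi> x) = 0" by (rule sum.neutral) (simp add: z)
    moreover have "chibar n w x = 0" using False by (simp add: chibar_def U_def)
    ultimately show ?thesis by (simp add: D_def H_def)
  next
    case True
    have "(\<Sum>\<psi>\<in>D. \<psi> 0 * \<psi> x) = (\<Sum>\<psi>\<in>D. \<psi> x)"
      by (rule sum.cong[OF refl]) (simp add: irrD(1)[OF Dirr])
    hence lhs: "(\<Sum>\<psi>\<in>D. \<psi> 0 * \<psi> x) = (if x \<in> H then of_nat (card D) else 0)"
      using sumH[of x] sumN[of x] True by simp
    have "(\<Sum>g\<in>U. if - g + x + g \<in> H then (1::complex) else 0) = (\<Sum>g\<in>U. if x \<in> H then 1 else 0)"
      by (intro sum.cong refl) (simp add: algebra_simps)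
    also have "\<dots> = (if x \<in> H then of_nat (card U) else 0)" by simp
    finally have "chibar n w x = (if x \<in> H then of_nat (card U) else 0) / of_nat (card H)"
      using True by (simp add: chibar_def U_def H_def)
    also have "\<dots> = (if x \<in> H then of_nat (card D) else 0)"
    proof -
      have "(of_nat (card U) :: complex) / of_nat (card H) = of_nat (card D)"
        using cardD[symmetric] cH by simp
      thus ?thesis by simp
    qed
    finally show ?thesis using lhs by (simp add: D_def H_def)
  qed
qed


lemma utw_mono: "iota v \<le> iota v' \<Longrightarrow> utw n v \<subseteq> utw n v'"
  unfolding utw_def le_fun_def by (auto intro: order.trans)

lemma utw_anti:
  assumes v: "v \<in> Sn n" and v': "v' \<in> Sn n" and sub: "utw n v \<subseteq> (utw n v' :: (nat \<Rightarrow> nat \<Rightarrow> 'a::{finite,field}) set)"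
  shows "iota v \<le> iota v'"
proof (rule ccontr)
  assume "\<not> iota v \<le> iota v'"
  then obtain k where k: "iota v' k < iota v k" unfolding le_fun_def by (meson not_le)
  define d where "d = iota v k"
  have kn: "k \<in> {1..n}" using k iota_out[OF v] iota_out[OF v'] by (cases "k = 0 \<or> n < k") auto
  have dpos: "0 < d" using k by (simp add: d_def)
  have dn: "d \<le> n - k" using iota_Tab[OF v] by (simp add: Tab_def d_def)
  define E where "E = (\<lambda>i j. if i = k \<and> j = k + d then (1::'a) else 0)"
  have "E \<in> ut n" unfolding ut_def E_def using kn dpos dn by auto
  hence "E \<in> utw n v" unfolding utw_def E_def using dpos by (auto simp: d_def)
  hence "E \<in> utw n v'" using sub by blast
  hence h: "\<forall>i j. E i j \<noteq> 0 \<longrightarrow> 0 < j - i \<and> j - i \<le> iota v' i" by (simp add: utw_def)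
  have "E k (k + d) \<noteq> 0" by (simp add: E_def)
  hence "(k + d) - k \<le> iota v' k" using h by blast
  hence "d \<le> iota v' k" by simp
  thus False using k by (simp add: d_def)
qed

lemma utw_le_iff:
  assumes "v \<in> Sn n" "v' \<in> Sn n"
  shows "utw n v \<subseteq> (utw n v' :: (nat \<Rightarrow> nat \<Rightarrow> 'a::{finite,field}) set) \<longleftrightarrow> iota v \<le> iota v'"
  using utw_anti[OF assms] utw_mono by blast

lemma zero_Tab: "(\<lambda>_. 0) \<in> Tab n" by (simp add: Tab_def)

lemma sup_Tab: "s \<in> Tab n \<Longrightarrow> t \<in> Tab n \<Longrightarrow> sup s t \<in> Tab n"
  by (simp add: Tab_def)

lemma largest_exists:
  fixes \<psi> :: "(nat \<Rightarrow> nat \<Rightarrow> 'a::{finite,field}) \<Rightarrow> complex"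
  assumes psi: "\<psi> \<in> irr n"
  shows "\<exists>v\<in>Sn n. largest_in_ker n v \<psi>"
proof -
  note I = irrD[OF psi]
  define Mv where "Mv = {v \<in> Sn n. utw n v \<subseteq> ker_char n \<psi>}"
  have finMv: "finite Mv" using Sn_finite_card by (simp add: Mv_def)
  define v0 where "v0 = perm_of n (\<lambda>_. 0)"
  have v0S: "v0 \<in> Sn n" using perm_of_Sn[OF zero_Tab] by (simp add: v0_def)
  have iv0: "iota v0 = (\<lambda>_. 0)" using iota_perm_of[OF zero_Tab] by (simp add: v0_def)
  have "utw n v0 \<subseteq> ker_char n \<psi>"
  proof
    fix x :: "nat \<Rightarrow> nat \<Rightarrow> 'a" assume xu: "x \<in> utw n v0"
    have "x i j = 0" for i j
    proof (rule ccontr)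
      assume "x i j \<noteq> 0"
      hence "0 < j - i \<and> j - i \<le> iota v0 i" using xu unfolding utw_def by blast
      thus False using iv0 by auto
    qed
    hence "x = 0" by (simp add: fun_eq_iff)
    thus "x \<in> ker_char n \<psi>" by (simp add: ker_char_def ut_zero)
  qed
  hence v0M: "v0 \<in> Mv" using v0S by (simp add: Mv_def)
  have join: "perm_of n (sup (iota v1) (iota v2)) \<in> Mv" if v1: "v1 \<in> Mv" and v2: "v2 \<in> Mv" for v1 v2
  proof -
    have v1S: "v1 \<in> Sn n" and v2S: "v2 \<in> Sn n" using v1 v2 by (auto simp: Mv_def)
    have sT: "sup (iota v1) (iota v2) \<in> Tab n" using sup_Tab iota_Tab v1S v2S by blast
    define vj where "vj = perm_of n (sup (iota v1) (iota v2))"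
    have vjS: "vj \<in> Sn n" using perm_of_Sn[OF sT] by (simp add: vj_def)
    have ivj: "iota vj = sup (iota v1) (iota v2)" using iota_perm_of[OF sT] by (simp add: vj_def)
    have "utw n vj \<subseteq> ker_char n \<psi>"
    proof
      fix x :: "nat \<Rightarrow> nat \<Rightarrow> 'a" assume x: "x \<in> utw n vj"
      define x1 where "x1 = (\<lambda>i j. if j - i \<le> iota v1 i then x i j else 0)"
      define x2 where "x2 = (\<lambda>i j. if j - i \<le> iota v1 i then 0 else x i j)"
      have xx: "x = x1 + x2" by (simp add: x1_def x2_def fun_eq_iff)
      have xu: "x \<in> ut n" using x by (simp add: utw_def)
      have xc: "\<And>i j. x i j \<noteq> 0 \<Longrightarrow> 0 < j - i \<and> j - i \<le> max (iota v1 i) (iota v2 i)"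
        using x unfolding utw_def ivj by (auto simp: sup_fun_def sup_nat_def)
      have x1u: "x1 \<in> utw n v1" using xu xc unfolding utw_def ut_def x1_def by auto
      have x2c: "0 < j - i \<and> j - i \<le> iota v2 i" if "x2 i j \<noteq> 0" for i j
      proof -
        have a: "x i j \<noteq> 0" "\<not> j - i \<le> iota v1 i" using that by (auto simp: x2_def split: if_splits)
        have "0 < j - i" "j - i \<le> max (iota v1 i) (iota v2 i)" using xc[OF a(1)] by auto
        thus ?thesis using a(2) by (simp add: max_def split: if_splits)
      qed
      have x2ut: "x2 \<in> ut n" using xu unfolding ut_def x2_def by auto
      have x2u: "x2 \<in> utw n v2" using x2ut x2c unfolding utw_def by blast
      have k1: "\<psi> x1 = \<psi> 0" and x1ut: "x1 \<in> ut n" using x1u v1 by (auto simp: Mv_def ker_char_def utw_def)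
      have k2: "\<psi> x2 = \<psi> 0" and x2ut: "x2 \<in> ut n" using x2u v2 by (auto simp: Mv_def ker_char_def utw_def)
      have "\<psi> x = \<psi> x1 * \<psi> x2" using I(2)[OF x1ut x2ut] xx by simp
      hence "\<psi> x = \<psi> 0" using k1 k2 I(1) by simp
      thus "x \<in> ker_char n \<psi>" using xu by (simp add: ker_char_def)
    qed
    thus ?thesis using vjS by (simp add: Mv_def vj_def)
  qed
  define m where "m = Max ((\<lambda>v. tsize n (iota v)) ` Mv)"
  have "m \<in> (\<lambda>v. tsize n (iota v)) ` Mv" unfolding m_def using finMv v0M by (intro Max_in) auto
  then obtain v where vM: "v \<in> Mv" and vm: "tsize n (iota v) = m" by auto
  have vmax: "tsize n (iota v') \<le> m" if "v' \<in> Mv" for v'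
    unfolding m_def using finMv that by (intro Max_ge) auto
  have vS: "v \<in> Sn n" using vM by (simp add: Mv_def)
  have below: "iota v' \<le> iota v" if v': "v' \<in> Mv" for v'
  proof (rule ccontr)
    assume "\<not> iota v' \<le> iota v"
    then obtain k where k: "iota v k < iota v' k" unfolding le_fun_def by (meson not_le)
    have v'S: "v' \<in> Sn n" using v' by (simp add: Mv_def)
    have kn: "k \<in> {1..n}" using k iota_out[OF vS] iota_out[OF v'S] by (cases "k = 0 \<or> n < k") auto
    have sT: "sup (iota v) (iota v') \<in> Tab n" using sup_Tab iota_Tab vS v'S by blast
    have jM: "perm_of n (sup (iota v) (iota v')) \<in> Mv" by (rule join[OF vM v'])
    have "tsize n (iota v) < tsize n (sup (iota v) (iota v'))"
      unfolding tsize_def by (rule sum_strict_mono_ex1) (use kn k in \<open>auto simp: sup_fun_def sup_nat_def intro!: bexI[of _ k]\<close>)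
    also have "\<dots> = tsize n (iota (perm_of n (sup (iota v) (iota v'))))" using iota_perm_of[OF sT] by simp
    also have "\<dots> \<le> m" by (rule vmax[OF jM])
    finally show False using vm by simp
  qed
  have "largest_in_ker n v \<psi>"
    unfolding largest_in_ker_def
  proof (intro conjI ballI impI)
    show "utw n v \<subseteq> ker_char n \<psi>" using vM by (simp add: Mv_def)
  next
    fix v' assume "v' \<in> Sn n" "utw n v' \<subseteq> ker_char n \<psi>"
    hence "v' \<in> Mv" by (simp add: Mv_def)
    thus "utw n v' \<subseteq> utw n v" using below utw_mono by blast
  qed
  thus ?thesis using vS by blast
qed

lemma largest_unique:
  fixes \<psi> :: "(nat \<Rightarrow> nat \<Rightarrow> 'a::{finite,field}) \<Rightarrow> complex"
  assumes "v \<in> Sn n" "v' \<in> Sn n" "largest_in_ker n v \<psi>" "largest_in_ker n v' \<psi>"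
  shows "v = v'"
proof -
  have "utw n v' \<subseteq> (utw n v :: (nat \<Rightarrow> nat \<Rightarrow> 'a) set)" using assms unfolding largest_in_ker_def by blast
  hence a: "iota v' \<le> iota v" using utw_anti[OF assms(2,1)] by blast
  have "utw n v \<subseteq> (utw n v' :: (nat \<Rightarrow> nat \<Rightarrow> 'a) set)" using assms unfolding largest_in_ker_def by blast
  hence b: "iota v \<le> iota v'" using utw_anti[OF assms(1,2)] by blast
  show ?thesis using iota_inj[OF assms(1,2)] a b by (simp add: antisym)
qed

lemma largest_iff:
  fixes \<psi> :: "(nat \<Rightarrow> nat \<Rightarrow> 'a::{finite,field}) \<Rightarrow> complex"
  assumes "v \<in> Sn n" "w \<in> Sn n" "largest_in_ker n v \<psi>"
  shows "utw n w \<subseteq> ker_char n \<psi> \<longleftrightarrow> iota w \<le> iota v"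
proof
  assume "utw n w \<subseteq> ker_char n \<psi>"
  hence "utw n w \<subseteq> (utw n v :: (nat \<Rightarrow> nat \<Rightarrow> 'a) set)" using assms unfolding largest_in_ker_def by blast
  thus "iota w \<le> iota v" using utw_anti[OF assms(2,1)] by blast
next
  assume "iota w \<le> iota v"
  hence "utw n w \<subseteq> (utw n v :: (nat \<Rightarrow> nat \<Rightarrow> 'a) set)" by (rule utw_mono)
  thus "utw n w \<subseteq> ker_char n \<psi>" using assms unfolding largest_in_ker_def by blast
qed

lemma chibar_expand:
  assumes w: "w \<in> Sn n"
  shows "chibar n w = (\<lambda>x. \<Sum>v\<in>Sn n. (if iota w \<le> iota v then 1 else 0) * (chi n v x :: complex))"
proof
  fix x :: "nat \<Rightarrow> nat \<Rightarrow> 'a::{finite,field}"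
  have finS: "finite (Sn n)" using Sn_finite_card by simp
  have finI: "finite (irr n :: ((nat \<Rightarrow> nat \<Rightarrow> 'a) \<Rightarrow> complex) set)" by (rule finite_irr)
  define f where "f = (\<lambda>\<psi>::(nat \<Rightarrow> nat \<Rightarrow> 'a) \<Rightarrow> complex. \<psi> 0 * \<psi> x)"
  have "(\<Sum>v\<in>Sn n. (if iota w \<le> iota v then 1 else 0) * chi n v x)
      = (\<Sum>v\<in>Sn n. \<Sum>\<psi>\<in>irr n. if largest_in_ker n v \<psi> \<and> iota w \<le> iota v then f \<psi> else 0)"
  proof (rule sum.cong[OF refl])
    fix v assume "v \<in> Sn n"
    have "chi n v x = (\<Sum>\<psi>\<in>{\<psi>\<in>irr n. largest_in_ker n v \<psi>}. f \<psi>)"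
      by (simp only: chi_def f_def)
    also have "\<dots> = (\<Sum>\<psi>\<in>irr n. if largest_in_ker n v \<psi> then f \<psi> else 0)"
      by (rule sum.inter_filter[OF finI])
    finally have c: "chi n v x = (\<Sum>\<psi>\<in>irr n. if largest_in_ker n v \<psi> then f \<psi> else 0)" .
    show "(if iota w \<le> iota v then 1 else 0) * chi n v x =
        (\<Sum>\<psi>\<in>irr n. if largest_in_ker n v \<psi> \<and> iota w \<le> iota v then f \<psi> else 0)"
    proof (cases "iota w \<le> iota v")
      case True thus ?thesis using c by simp
    next
      case False thus ?thesis by simp
    qed
  qed
  also have "\<dots> = (\<Sum>\<psi>\<in>irr n. \<Sum>v\<in>Sn n. if largest_in_ker n v \<psi> \<and> iota w \<le> iota v then f \<psi> else 0)"
    by (rule sum.swap)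
  also have "\<dots> = (\<Sum>\<psi>\<in>irr n. if utw n w \<subseteq> ker_char n \<psi> then f \<psi> else 0)"
  proof (rule sum.cong[OF refl])
    fix \<psi> :: "(nat \<Rightarrow> nat \<Rightarrow> 'a) \<Rightarrow> complex" assume psi: "\<psi> \<in> irr n"
    obtain v0 where v0: "v0 \<in> Sn n" "largest_in_ker n v0 \<psi>" using largest_exists[OF psi] by blast
    have "(\<Sum>v\<in>Sn n. if largest_in_ker n v \<psi> \<and> iota w \<le> iota v then f \<psi> else 0)
        = (\<Sum>v\<in>Sn n. if v = v0 then (if iota w \<le> iota v0 then f \<psi> else 0) else 0)"
    proof (rule sum.cong[OF refl])
      fix v assume v: "v \<in> Sn n"
      show "(if largest_in_ker n v \<psi> \<and> iota w \<le> iota v then f \<psi> else 0) =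
          (if v = v0 then (if iota w \<le> iota v0 then f \<psi> else 0) else 0)"
      proof (cases "v = v0")
        case True thus ?thesis using v0(2) by simp
      next
        case False
        hence "\<not> largest_in_ker n v \<psi>" using largest_unique[OF v v0(1) _ v0(2)] by blast
        thus ?thesis using False by simp
      qed
    qed
    also have "\<dots> = (if iota w \<le> iota v0 then f \<psi> else 0)" using sum.delta[OF finS, of v0 "\<lambda>_. if iota w \<le> iota v0 then f \<psi> else 0"] v0(1) by simp
    also have "\<dots> = (if utw n w \<subseteq> ker_char n \<psi> then f \<psi> else 0)" using largest_iff[OF v0(1) w v0(2)] by simp
    finally show "(\<Sum>v\<in>Sn n. if largest_in_ker n v \<psi> \<and> iota w \<le> iota v then f \<psi> else 0) =
        (if utw n w \<subseteq> ker_char n \<psi> then f \<psi> else 0)" .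
  qed
  also have "\<dots> = (\<Sum>\<psi>\<in>{\<psi>\<in>irr n. utw n w \<subseteq> ker_char n \<psi>}. f \<psi>)"
    by (rule sum.inter_filter[OF finI, symmetric])
  also have "\<dots> = chibar n w x" unfolding f_def by (rule char_sum)
  finally show "chibar n w x = (\<Sum>v\<in>Sn n. (if iota w \<le> iota v then 1 else 0) * chi n v x)" by simp
qed


lemma kappa_iota_inv:
  assumes "u \<in> Sn n"
  shows "kappa u k = iota (inv u) k"
proof -
  have "bij u" using assms by (simp add: Sn_def permutes_bij)
  hence "inv (inv u) = u" by (rule inv_inv_eq)
  thus ?thesis by (simp add: kappa_def iota_def)
qed

lemma inv_Sn: "u \<in> Sn n \<Longrightarrow> inv u \<in> Sn n"
  by (simp add: Sn_def permutes_inv)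

lemma inv_inv_Sn: "u \<in> Sn n \<Longrightarrow> inv (inv u) = u"
  by (simp add: Sn_def permutes_bij inv_inv_eq)

lemma le_iota_iff:
  assumes "w \<in> Sn n" "v \<in> Sn n"
  shows "iota w \<le> iota v \<longleftrightarrow> (\<forall>k\<in>{1..n}. iota w k \<le> iota v k)"
proof
  assume h: "\<forall>k\<in>{1..n}. iota w k \<le> iota v k"
  show "iota w \<le> iota v" unfolding le_fun_def
  proof
    fix k show "iota w k \<le> iota v k"
    proof (cases "k = 0 \<or> n < k")
      case True thus ?thesis using iota_out[OF assms(1) True] by simp
    next
      case False thus ?thesis using h by auto
    qed
  qed
qed (auto simp: le_fun_def)

theorem theorem5p1:
  fixes n :: nat and w :: "nat \<Rightarrow> nat"
    and star :: "((nat \<Rightarrow> nat \<Rightarrow> 'a::{finite,field}) \<Rightarrow> complex) \<Rightarrow> ((nat \<Rightarrow> nat \<Rightarrow> 'a) \<Rightarrow> complex)"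
  assumes "w \<in> Sn n"
    and star_def: "\<And>c. star (\<lambda>x. \<Sum>v\<in>Sn n. c v * chi n v x) = (\<lambda>x. \<Sum>v\<in>Sn n. c v * chi n (inv v) x)"
  shows "star (chibar n w) =
    (\<lambda>x. \<Sum>z\<in>{z\<in>Sn n. card {y\<in>Cvee n z. \<forall>k\<in>{1..n}. kappa (inv w) k \<le> kappa y k} = 1}.
        (-1::complex) ^ (iota_size n z -
            iota_size n (THE y. y \<in> Cvee n z \<and> (\<forall>k\<in>{1..n}. kappa (inv w) k \<le> kappa y k)))
        * chibar n z x)"
proof -
  note wS = assms(1)
  define c where "c = kappa (inv w)"
  have finS: "finite (Sn n)" using Sn_finite_card by simp
  define cw where "cw = (\<lambda>v. if iota w \<le> iota v then 1 else (0::complex))"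
  have CE: "chibar n w = (\<lambda>x. \<Sum>v\<in>Sn n. cw v * (chi n v x :: complex))"
    using chibar_expand[OF wS] by (simp add: cw_def)
  have L: "star (chibar n w) = (\<lambda>x. \<Sum>v\<in>Sn n. cw v * chi n (inv v) x)"
    unfolding CE by (rule star_def)
  have c_eq: "c k = iota w k" for k
    using kappa_iota_inv[OF inv_Sn[OF wS]] inv_inv_Sn[OF wS] by (simp add: c_def)
  have cw_inv: "cw (inv u) = (if \<forall>k\<in>{1..n}. c k \<le> kappa u k then 1 else 0)" if u: "u \<in> Sn n" for u
    using le_iota_iff[OF wS inv_Sn[OF u]] kappa_iota_inv[OF u] c_eq by (simp add: cw_def)
  define A where "A = (\<lambda>z. \<Sum>y\<in>Sp n z c. (-1::complex) ^ (iota_size n z - iota_size n y))"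
  show ?thesis
  proof
    fix x :: "nat \<Rightarrow> nat \<Rightarrow> 'a"
    have bi: "bij_betw inv (Sn n) (Sn n)"
      by (rule bij_betw_byWitness[where f' = inv]) (auto simp: inv_inv_Sn inv_Sn)
    have "(\<Sum>v\<in>Sn n. cw v * chi n (inv v) x) = (\<Sum>v\<in>Sn n. cw (inv (inv v)) * chi n (inv v) x)"
      by (rule sum.cong[OF refl]) (simp add: inv_inv_Sn)
    also have "\<dots> = (\<Sum>u\<in>Sn n. cw (inv u) * chi n u x)"
      by (rule sum.reindex_bij_betw[OF bi, of "\<lambda>u. cw (inv u) * chi n u x"])
    also have "\<dots> = (\<Sum>u\<in>Sn n. (\<Sum>z\<in>{z \<in> Sn n. iota z \<le> iota u}. A z) * chi n u x)"
      by (rule sum.cong[OF refl]) (simp add: cw_inv mobius_sum A_def)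
    also have "\<dots> = (\<Sum>u\<in>Sn n. \<Sum>z\<in>Sn n. A z * ((if iota z \<le> iota u then 1 else 0) * chi n u x))"
    proof (rule sum.cong[OF refl])
      fix u assume "u \<in> Sn n"
      have "(\<Sum>z\<in>{z \<in> Sn n. iota z \<le> iota u}. A z) = (\<Sum>z\<in>Sn n. if iota z \<le> iota u then A z else 0)"
        by (rule sum.inter_filter[OF finS])
      thus "(\<Sum>z\<in>{z \<in> Sn n. iota z \<le> iota u}. A z) * chi n u x =
          (\<Sum>z\<in>Sn n. A z * ((if iota z \<le> iota u then 1 else 0) * chi n u x))"
        by (simp add: sum_distrib_right) (rule sum.cong[OF refl], simp)
    qed
    also have "\<dots> = (\<Sum>z\<in>Sn n. A z * (\<Sum>u\<in>Sn n. (if iota z \<le> iota u then 1 else 0) * chi n u x))"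
      by (subst sum.swap) (simp add: sum_distrib_left)
    also have "\<dots> = (\<Sum>z\<in>Sn n. A z * chibar n z x)"
      by (rule sum.cong[OF refl]) (simp add: chibar_expand)
    also have "\<dots> = (\<Sum>z\<in>Sn n. if card (Sp n z c) = 1 then
          (-1::complex) ^ (iota_size n z - iota_size n (THE y. y \<in> Sp n z c)) * chibar n z x else 0)"
      by (rule sum.cong[OF refl]) (simp add: A_def Sp_sum)
    also have "\<dots> = (\<Sum>z\<in>{z\<in>Sn n. card (Sp n z c) = 1}.
          (-1::complex) ^ (iota_size n z - iota_size n (THE y. y \<in> Sp n z c)) * chibar n z x)"
      by (rule sum.inter_filter[OF finS, symmetric])
    finally show "star (chibar n w) x = (\<Sum>z\<in>{z\<in>Sn n. card {y\<in>Cvee n z. \<forall>k\<in>{1..n}. kappa (inv w) k \<le> kappa y k} = 1}.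
        (-1::complex) ^ (iota_size n z -
            iota_size n (THE y. y \<in> Cvee n z \<and> (\<forall>k\<in>{1..n}. kappa (inv w) k \<le> kappa y k)))
        * chibar n z x)"
      using L by (simp add: Sp_def c_def)
  qed
qed


end
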